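(* Let $G$ be a finite metacyclic group. Then every family $\mathcal{F}$ of subgroups of $G$ that is generating, closed under conjugation, regular and independent has active sum isomorphic to $G$, i.e. the canonical homomorphism $\varphi:S\to G$ from the active sum $S$ of $\mathcal{F}$ is an isomorphism.
   Context: A group is metacyclic if it has a normal cyclic subgroup with cyclic quotient. Families are discrete families of distinct subgroups. For a group $G$ and a family $\mathcal{F}$ of distinct subgroups that generates $G$ and is closed under conjugation ($g^{-1}Fg\in\mathcal{F}$ for all $F\in\mathcal{F}$, $g\in G$), the active sum $S$ of $\mathcal{F}$ is the free product of the members of $\mathcal{F}$ divided by the normal subgroup generated by all elements $h^{-1}\cdot g\cdot h\cdot (g^h)^{-1}$ with $h\in F_1$, $g\in F_2$, $F_1,F_2\in\mathcal{F}$, where $g^h=h^{-1}gh$ is regarded as an element of the factor $F_2^h=h^{-1}F_2h\in\mathcal{F}$. The inclusions induce a canonical surjective homomorphism $\varphi:S\to G$. Such a family is regular iff $[F,N_G(F)]=F\cap G'$ for every $F\in\mathcal{F}$, where $N_G(F)$ is the normalizer and $G'$ the commutator subgroup. Choosing a set $\mathcal{T}$ of representatives of the conjugacy classes of members of $\mathcal{F}$, the family is independent iff the canonical homomorphism $\bigoplus_{F\in\mathcal{T}}F/(F\cap G')\to G/G'$ is an isomorphism. *)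

theory Defs
  imports "HOL-Algebra.Algebra"
begin

text \<open>Signed letters: (x, True) stands for the generator x, (x, False) for its inverse.\<close>

inductive_set pres_cong :: "'g set \<Rightarrow> ('g \<times> bool) list set \<Rightarrow> (('g \<times> bool) list \<times> ('g \<times> bool) list) set"
  for Xg Rr where
  refl: "set (map fst w) \<subseteq> Xg \<Longrightarrow> (w, w) \<in> pres_cong Xg Rr"
| sym: "(v, w) \<in> pres_cong Xg Rr \<Longrightarrow> (w, v) \<in> pres_cong Xg Rr"
| trans: "(u, v) \<in> pres_cong Xg Rr \<Longrightarrow> (v, w) \<in> pres_cong Xg Rr \<Longrightarrow> (u, w) \<in> pres_cong Xg Rr"
| cancel: "set (map fst (u @ v)) \<subseteq> Xg \<Longrightarrow> x \<in> Xg \<Longrightarrow>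
             (u @ [(x, b), (x, \<not> b)] @ v, u @ v) \<in> pres_cong Xg Rr"
| rel: "r \<in> Rr \<Longrightarrow> set (map fst (u @ r @ v)) \<subseteq> Xg \<Longrightarrow> (u @ r @ v, u @ v) \<in> pres_cong Xg Rr"

definition presented_group :: "'g set \<Rightarrow> ('g \<times> bool) list set \<Rightarrow> ('g \<times> bool) list set monoid" where
  "presented_group Xg Rr =
     \<lparr> carrier = Equiv_Relations.quotient {w. set (map fst w) \<subseteq> Xg} (pres_cong Xg Rr),
       monoid.mult = (\<lambda>A B. pres_cong Xg Rr `` {(SOME a. a \<in> A) @ (SOME b. b \<in> B)}),
       one = pres_cong Xg Rr `` {[]} \<rparr>"

definition conj_set :: "('a, 'b) monoid_scheme \<Rightarrow> 'a set \<Rightarrow> 'a \<Rightarrow> 'a set" where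
  "conj_set G F h = (\<lambda>g. inv\<^bsub>G\<^esub> h \<otimes>\<^bsub>G\<^esub> g \<otimes>\<^bsub>G\<^esub> h) ` F"

definition as_gens :: "('a, 'b) monoid_scheme \<Rightarrow> 'a set set \<Rightarrow> ('a set \<times> 'a) set" where
  "as_gens G \<F> = {(F, x). F \<in> \<F> \<and> x \<in> F}"

text \<open>Relators: the multiplication tables of the factors (giving the free product) and the
  relations h^{-1} g h = g^h, with g^h regarded as an element of the factor F2^h.\<close>
definition as_rels :: "('a, 'b) monoid_scheme \<Rightarrow> 'a set set \<Rightarrow> (('a set \<times> 'a) \<times> bool) list set" where
  "as_rels G \<F> =
     {[((F, x), True), ((F, y), True), ((F, x \<otimes>\<^bsub>G\<^esub> y), False)] | F x y. F \<in> \<F> \<and> x \<in> F \<and> y \<in> F}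
   \<union> {[((F1, h), False), ((F2, g), True), ((F1, h), True),
        ((conj_set G F2 h, inv\<^bsub>G\<^esub> h \<otimes>\<^bsub>G\<^esub> g \<otimes>\<^bsub>G\<^esub> h), False)]
       | F1 F2 h g. F1 \<in> \<F> \<and> F2 \<in> \<F> \<and> h \<in> F1 \<and> g \<in> F2}"

definition active_sum :: "('a, 'b) monoid_scheme \<Rightarrow> 'a set set \<Rightarrow> (('a set \<times> 'a) \<times> bool) list set monoid" where
  "active_sum G \<F> = presented_group (as_gens G \<F>) (as_rels G \<F>)"

definition eval_word :: "('a, 'b) monoid_scheme \<Rightarrow> (('a set \<times> 'a) \<times> bool) list \<Rightarrow> 'a" where
  "eval_word G w = foldr (\<lambda>((F, x), b) acc. (if b then x else inv\<^bsub>G\<^esub> x) \<otimes>\<^bsub>G\<^esub> acc) w \<one>\<^bsub>G\<^esub>"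

definition active_sum_hom :: "('a, 'b) monoid_scheme \<Rightarrow> 'a set set \<Rightarrow> (('a set \<times> 'a) \<times> bool) list set \<Rightarrow> 'a" where
  "active_sum_hom G \<F> A = eval_word G (SOME w. w \<in> A)"

definition metacyclic :: "('a, 'b) monoid_scheme \<Rightarrow> bool" where
  "metacyclic G \<longleftrightarrow> (\<exists>N. N \<lhd> G \<and> cyclic_group (G\<lparr>carrier := N\<rparr>) \<and> cyclic_group (G Mod N))"

definition commutator_subgroup :: "('a, 'b) monoid_scheme \<Rightarrow> 'a set \<Rightarrow> 'a set \<Rightarrow> 'a set" where
  "commutator_subgroup G A B =
     generate G {a \<otimes>\<^bsub>G\<^esub> b \<otimes>\<^bsub>G\<^esub> inv\<^bsub>G\<^esub> a \<otimes>\<^bsub>G\<^esub> inv\<^bsub>G\<^esub> b | a b. a \<in> A \<and> b \<in> B}"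

definition family :: "('a, 'b) monoid_scheme \<Rightarrow> 'a set set \<Rightarrow> bool" where
  "family G \<F> \<longleftrightarrow> (\<forall>F\<in>\<F>. subgroup F G)"

definition generating :: "('a, 'b) monoid_scheme \<Rightarrow> 'a set set \<Rightarrow> bool" where
  "generating G \<F> \<longleftrightarrow> generate G (\<Union>\<F>) = carrier G"

definition conj_closed :: "('a, 'b) monoid_scheme \<Rightarrow> 'a set set \<Rightarrow> bool" where
  "conj_closed G \<F> \<longleftrightarrow> (\<forall>F\<in>\<F>. \<forall>g\<in>carrier G. conj_set G F g \<in> \<F>)"

definition regular_family :: "('a, 'b) monoid_scheme \<Rightarrow> 'a set set \<Rightarrow> bool" where
  "regular_family G \<F> \<longleftrightarrow>
     (\<forall>F\<in>\<F>. commutator_subgroup G F (normalizer G F) = F \<inter> derived G (carrier G))"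

definition conj_reps :: "('a, 'b) monoid_scheme \<Rightarrow> 'a set set \<Rightarrow> 'a set set \<Rightarrow> bool" where
  "conj_reps G \<F> T \<longleftrightarrow> T \<subseteq> \<F> \<and> (\<forall>F\<in>\<F>. \<exists>!F'\<in>T. \<exists>g\<in>carrier G. F = conj_set G F' g)"

text \<open>The canonical map  (+)_{F in T} F/(F \<inter> G') -> G/G': a family of cosets c F of F \<inter> G' in F
  is sent to the product of the cosets (c F) G' in G/G'.\<close>
definition indep_map :: "('a, 'b) monoid_scheme \<Rightarrow> 'a set set \<Rightarrow> ('a set \<Rightarrow> 'a set) \<Rightarrow> 'a set" where
  "indep_map G T c =
     finprod (G Mod derived G (carrier G)) (\<lambda>F. c F <#>\<^bsub>G\<^esub> derived G (carrier G)) T"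

definition independent_family :: "('a, 'b) monoid_scheme \<Rightarrow> 'a set set \<Rightarrow> bool" where
  "independent_family G \<F> \<longleftrightarrow>
     (\<exists>T. conj_reps G \<F> T \<and>
        indep_map G T \<in> iso
          (product_group T (\<lambda>F. (G\<lparr>carrier := F\<rparr>) Mod (F \<inter> derived G (carrier G))))
          (G Mod derived G (carrier G)))"

end

theory Submission
  imports Defs
begin


definition wrds :: "'g set \<Rightarrow> ('g \<times> bool) list set" where
  "wrds Xg = {w. set (map fst w) \<subseteq> Xg}"

definition invw :: "('g \<times> bool) list \<Rightarrow> ('g \<times> bool) list" where
  "invw w = rev (map (\<lambda>(x,b). (x, \<not> b)) w)"

lemma words_simps[simp]:
  "[] \<in> wrds Xg" "(l # w \<in> wrds Xg) \<longleftrightarrow> fst l \<in> Xg \<and> w \<in> wrds Xg"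
  "(u @ v \<in> wrds Xg) \<longleftrightarrow> u \<in> wrds Xg \<and> v \<in> wrds Xg"
  by (auto simp: wrds_def)

lemma invw_simps[simp]: "invw [] = []" "invw (l # w) = invw w @ [(fst l, \<not> snd l)]"
  "invw (u @ v) = invw v @ invw u"
  by (auto simp: invw_def split: prod.splits)

lemma invw_words[simp]: "(invw w \<in> wrds Xg) = (w \<in> wrds Xg)"
  by (induct w) auto

lemma pc_words: "(u, v) \<in> pres_cong Xg Rr \<Longrightarrow> u \<in> wrds Xg \<and> v \<in> wrds Xg"
  by (induct rule: pres_cong.induct) (auto simp: wrds_def)

lemma pc_refl: "w \<in> wrds Xg \<Longrightarrow> (w, w) \<in> pres_cong Xg Rr"
  by (rule pres_cong.refl) (simp add: wrds_def)

lemma pc_equiv: "equiv (wrds Xg) (pres_cong Xg Rr)"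
  unfolding equiv_def refl_on_def sym_def trans_def
  using pc_words pc_refl pres_cong.sym pres_cong.trans by fast

lemma pc_app_right: "(u, v) \<in> pres_cong Xg Rr \<Longrightarrow> w \<in> wrds Xg \<Longrightarrow> (u @ w, v @ w) \<in> pres_cong Xg Rr"
proof (induct rule: pres_cong.induct)
  case (refl w') then show ?case by (intro pres_cong.refl) (auto simp: wrds_def)
next
  case (sym v w) then show ?case by (blast intro: pres_cong.sym)
next
  case (trans u v w) then show ?case by (blast intro: pres_cong.trans)
next
  case (cancel u v x b)
  then show ?case using pres_cong.cancel[of u "v @ w" Xg x b Rr] by (auto simp: wrds_def)
next
  case (rel r u v)
  then show ?case using pres_cong.rel[of r Rr u "v @ w" Xg] by (auto simp: wrds_def)
qed

lemma pc_app_left: "(u, v) \<in> pres_cong Xg Rr \<Longrightarrow> w \<in> wrds Xg \<Longrightarrow> (w @ u, w @ v) \<in> pres_cong Xg Rr"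
proof (induct rule: pres_cong.induct)
  case (refl w') then show ?case by (intro pres_cong.refl) (auto simp: wrds_def)
next
  case (sym v w) then show ?case by (blast intro: pres_cong.sym)
next
  case (trans u v w) then show ?case by (blast intro: pres_cong.trans)
next
  case (cancel u v x b)
  then show ?case using pres_cong.cancel[of "w @ u" v Xg x b Rr] by (auto simp: wrds_def)
next
  case (rel r u v)
  then show ?case using pres_cong.rel[of r Rr "w @ u" v Xg] by (auto simp: wrds_def)
qed

lemma pc_app: "(u, u') \<in> pres_cong Xg Rr \<Longrightarrow> (v, v') \<in> pres_cong Xg Rr \<Longrightarrow> (u @ v, u' @ v') \<in> pres_cong Xg Rr"
  by (meson pc_app_left pc_app_right pc_words pres_cong.trans)

lemma pc_inv: "w \<in> wrds Xg \<Longrightarrow> (w @ invw w, []) \<in> pres_cong Xg Rr \<and> (invw w @ w, []) \<in> pres_cong Xg Rr"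
proof (induct w)
  case Nil then show ?case by (auto intro: pc_refl)
next
  case (Cons l w)
  obtain x b where l: "l = (x, b)" by force
  have x: "x \<in> Xg" and w: "w \<in> wrds Xg" using Cons l by auto
  have c1: "([(x,b),(x,\<not>b)], []) \<in> pres_cong Xg Rr"
    using pres_cong.cancel[of "[]" "[]" Xg x b Rr] x by auto
  have c2: "([(x,\<not>b),(x,b)], []) \<in> pres_cong Xg Rr"
    using pres_cong.cancel[of "[]" "[]" Xg x "\<not>b" Rr] x by auto
  have a1: "([(x,b)] @ (w @ invw w) @ [(x,\<not>b)], [(x,b)] @ [] @ [(x,\<not>b)]) \<in> pres_cong Xg Rr"
    using Cons w x by (intro pc_app pc_refl) auto
  have a2: "(invw w @ [(x,\<not>b),(x,b)] @ w, invw w @ [] @ w) \<in> pres_cong Xg Rr"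
    using c2 w by (intro pc_app pc_refl) auto
  show ?case using a1 a2 c1 Cons w by (auto simp: l intro: pres_cong.trans)
qed

abbreviation cls where "cls Xg Rr w \<equiv> pres_cong Xg Rr `` {w}"

lemma cls_eq: "(u, v) \<in> pres_cong Xg Rr \<Longrightarrow> cls Xg Rr u = cls Xg Rr v"
  using pc_equiv by (metis equiv_class_eq)

lemma cls_eq_iff: "u \<in> wrds Xg \<Longrightarrow> v \<in> wrds Xg \<Longrightarrow> cls Xg Rr u = cls Xg Rr v \<longleftrightarrow> (u, v) \<in> pres_cong Xg Rr"
  using pc_equiv by (metis eq_equiv_class_iff)

lemma carrier_pg: "carrier (presented_group Xg Rr) = {cls Xg Rr w | w. w \<in> wrds Xg}"
  by (auto simp: presented_group_def quotient_def wrds_def)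

lemma one_pg: "\<one>\<^bsub>presented_group Xg Rr\<^esub> = cls Xg Rr []"
  by (simp add: presented_group_def)

lemma mult_pg: "u \<in> wrds Xg \<Longrightarrow> v \<in> wrds Xg \<Longrightarrow>
   cls Xg Rr u \<otimes>\<^bsub>presented_group Xg Rr\<^esub> cls Xg Rr v = cls Xg Rr (u @ v)"
proof -
  assume u: "u \<in> wrds Xg" and v: "v \<in> wrds Xg"
  have "u \<in> cls Xg Rr u" "v \<in> cls Xg Rr v" using u v pc_refl by fastforce+
  then have a: "(SOME a. a \<in> cls Xg Rr u) \<in> cls Xg Rr u" and b: "(SOME a. a \<in> cls Xg Rr v) \<in> cls Xg Rr v"
    by (meson someI)+
  show ?thesis unfolding presented_group_def using pc_app[OF _ _ ] a b
    by (simp add: cls_eq[symmetric] pc_app)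
qed

lemma group_pg: "group (presented_group Xg Rr)"
proof (rule groupI)
  fix x y assume "x \<in> carrier (presented_group Xg Rr)" "y \<in> carrier (presented_group Xg Rr)"
  then show "x \<otimes>\<^bsub>presented_group Xg Rr\<^esub> y \<in> carrier (presented_group Xg Rr)"
    by (auto simp: carrier_pg mult_pg)
next
  show "\<one>\<^bsub>presented_group Xg Rr\<^esub> \<in> carrier (presented_group Xg Rr)"
    by (auto simp: carrier_pg one_pg)
next
  fix x y z assume "x \<in> carrier (presented_group Xg Rr)" "y \<in> carrier (presented_group Xg Rr)"
    "z \<in> carrier (presented_group Xg Rr)"
  then show "x \<otimes>\<^bsub>presented_group Xg Rr\<^esub> y \<otimes>\<^bsub>presented_group Xg Rr\<^esub> z =
        x \<otimes>\<^bsub>presented_group Xg Rr\<^esub> (y \<otimes>\<^bsub>presented_group Xg Rr\<^esub> z)"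
    by (auto simp: carrier_pg mult_pg)
next
  fix x assume "x \<in> carrier (presented_group Xg Rr)"
  then show "\<one>\<^bsub>presented_group Xg Rr\<^esub> \<otimes>\<^bsub>presented_group Xg Rr\<^esub> x = x"
    by (auto simp: carrier_pg mult_pg one_pg)
next
  fix x assume "x \<in> carrier (presented_group Xg Rr)"
  then obtain w where w: "w \<in> wrds Xg" "x = cls Xg Rr w" by (auto simp: carrier_pg)
  show "\<exists>y\<in>carrier (presented_group Xg Rr). y \<otimes>\<^bsub>presented_group Xg Rr\<^esub> x = \<one>\<^bsub>presented_group Xg Rr\<^esub>"
    using w pc_inv[OF w(1)] by (intro bexI[of _ "cls Xg Rr (invw w)"]) (auto simp: carrier_pg mult_pg one_pg cls_eq)
qed

lemma cls_in_pg: "w \<in> wrds Xg \<Longrightarrow> cls Xg Rr w \<in> carrier (presented_group Xg Rr)"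
  by (auto simp: carrier_pg)

lemma cls_cons: "l \<in> set w \<or> True \<Longrightarrow> fst l \<in> Xg \<Longrightarrow> w \<in> wrds Xg \<Longrightarrow>
  cls Xg Rr (l # w) = cls Xg Rr [l] \<otimes>\<^bsub>presented_group Xg Rr\<^esub> cls Xg Rr w"
  by (simp add: mult_pg)

lemma cls_letter_inv: "x \<in> Xg \<Longrightarrow> cls Xg Rr [(x, \<not> b)] = inv\<^bsub>presented_group Xg Rr\<^esub> (cls Xg Rr [(x, b)])"
proof -
  assume x: "x \<in> Xg"
  interpret group "presented_group Xg Rr" by (rule group_pg)
  have "cls Xg Rr [(x, b)] \<otimes>\<^bsub>presented_group Xg Rr\<^esub> cls Xg Rr [(x, \<not> b)] = \<one>\<^bsub>presented_group Xg Rr\<^esub>"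
    using x pres_cong.cancel[of "[]" "[]" Xg x b Rr] by (simp add: mult_pg one_pg cls_eq)
  then show ?thesis using x by (metis cls_in_pg inv_equality words_simps(1,2) fst_conv l_inv r_inv inv_inv
        inv_closed)
qed

lemma cls_rel: "r \<in> Rr \<Longrightarrow> r \<in> wrds Xg \<Longrightarrow> cls Xg Rr r = \<one>\<^bsub>presented_group Xg Rr\<^esub>"
  using pres_cong.rel[of r Rr "[]" "[]" Xg] by (simp add: one_pg cls_eq wrds_def)




lemma (in group) cancel_simps:
  "x \<in> carrier G \<Longrightarrow> y \<in> carrier G \<Longrightarrow> x \<otimes> (inv x \<otimes> y) = y"
  "x \<in> carrier G \<Longrightarrow> y \<in> carrier G \<Longrightarrow> inv x \<otimes> (x \<otimes> y) = y"
  by (simp_all add: m_assoc[symmetric])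

locale asetup =
  fixes G :: "('a, 'b) monoid_scheme" and Fam :: "'a set set"
  assumes grp: "group G" and fam: "family G Fam" and cc: "conj_closed G Fam"
begin

abbreviation "Xa \<equiv> as_gens G Fam"
abbreviation "Ra \<equiv> as_rels G Fam"
abbreviation "S \<equiv> active_sum G Fam"
abbreviation "\<phi> \<equiv> active_sum_hom G Fam"
abbreviation "cl \<equiv> cls Xa Ra"
definition "\<iota> F f = cl [((F, f), True)]"

sublocale G: group G by (rule grp)
sublocale S: group S unfolding active_sum_def by (rule group_pg)

lemma sub: "F \<in> Fam \<Longrightarrow> subgroup F G"
  using fam by (auto simp: family_def)

lemma sub_carrier: "F \<in> Fam \<Longrightarrow> x \<in> F \<Longrightarrow> x \<in> carrier G"
  using sub subgroup.subset by blast

lemma gens_iff[simp]: "(F, x) \<in> Xa \<longleftrightarrow> F \<in> Fam \<and> x \<in> F"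
  by (simp add: as_gens_def)

lemma conj_in: "F \<in> Fam \<Longrightarrow> g \<in> carrier G \<Longrightarrow> conj_set G F g \<in> Fam"
  using cc by (auto simp: conj_closed_def)

lemma conj_mem: "f \<in> F \<Longrightarrow> inv\<^bsub>G\<^esub> g \<otimes>\<^bsub>G\<^esub> f \<otimes>\<^bsub>G\<^esub> g \<in> conj_set G F g"
  by (auto simp: conj_set_def)

lemma rels_words: "r \<in> Ra \<Longrightarrow> r \<in> wrds Xa"
  unfolding as_rels_def
  by (auto simp: wrds_def conj_in sub_carrier conj_mem intro: subgroup.m_closed[OF sub])

lemma eval_nil[simp]: "eval_word G [] = \<one>\<^bsub>G\<^esub>"
  by (simp add: eval_word_def)

lemma eval_cons[simp]: "eval_word G (((F, x), b) # w) = (if b then x else inv\<^bsub>G\<^esub> x) \<otimes>\<^bsub>G\<^esub> eval_word G w"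
  by (simp add: eval_word_def)

lemma eval_carrier: "w \<in> wrds Xa \<Longrightarrow> eval_word G w \<in> carrier G"
proof (induct w)
  case Nil then show ?case by simp
next
  case (Cons l w)
  obtain F x b where l: "l = ((F, x), b)" by (metis prod.collapse)
  then show ?case using Cons by (auto simp: sub_carrier)
qed

lemma eval_append: "u \<in> wrds Xa \<Longrightarrow> v \<in> wrds Xa \<Longrightarrow> eval_word G (u @ v) = eval_word G u \<otimes>\<^bsub>G\<^esub> eval_word G v"
proof (induct u)
  case Nil then show ?case using eval_carrier by simp
next
  case (Cons l w)
  obtain F x b where l: "l = ((F, x), b)" by (metis prod.collapse)
  then show ?case using Cons by (auto simp: sub_carrier eval_carrier G.m_assoc)
qed

lemma eval_rel: "r \<in> Ra \<Longrightarrow> eval_word G r = \<one>\<^bsub>G\<^esub>"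
  unfolding as_rels_def
  by (auto simp: sub_carrier G.m_assoc G.inv_mult_group G.cancel_simps intro: subgroup.m_closed[OF sub])

lemma eval_cong: "(u, v) \<in> pres_cong Xa Ra \<Longrightarrow> eval_word G u = eval_word G v"
proof (induct rule: pres_cong.induct)
  case (cancel u v x b)
  obtain F y where x: "x = (F, y)" by force
  then have "y \<in> carrier G" using cancel sub_carrier by auto
  then show ?case using cancel x
    by (auto simp: eval_append wrds_def eval_carrier G.m_assoc G.cancel_simps)
next
  case (rel r u v)
  have w: "u \<in> wrds Xa" "r \<in> wrds Xa" "v \<in> wrds Xa"
    using rel(2) by (auto simp: wrds_def)
  then show ?case using eval_rel[OF rel(1)] eval_carrier[OF w(3)]
    by (simp add: eval_append)
qed auto

lemma phi_cl: "w \<in> wrds Xa \<Longrightarrow> \<phi> (cl w) = eval_word G w"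
proof -
  assume w: "w \<in> wrds Xa"
  have "w \<in> cl w" using w pc_refl by fastforce
  then have "(SOME v. v \<in> cl w) \<in> cl w" by (meson someI)
  then show ?thesis unfolding active_sum_hom_def using eval_cong
    by (metis Image_singleton_iff pres_cong.sym)
qed

lemma carrier_S: "carrier S = {cl w | w. w \<in> wrds Xa}"
  by (simp add: active_sum_def carrier_pg)

lemma one_S: "\<one>\<^bsub>S\<^esub> = cl []"
  by (simp add: active_sum_def one_pg)

lemma mult_S: "u \<in> wrds Xa \<Longrightarrow> v \<in> wrds Xa \<Longrightarrow> cl u \<otimes>\<^bsub>S\<^esub> cl v = cl (u @ v)"
  by (simp add: active_sum_def mult_pg)

lemma cl_in: "w \<in> wrds Xa \<Longrightarrow> cl w \<in> carrier S"
  by (auto simp: carrier_S)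

lemma phi_hom: "\<phi> \<in> hom S G"
proof (rule homI)
  fix x assume "x \<in> carrier S"
  then show "\<phi> x \<in> carrier G" by (auto simp: carrier_S phi_cl eval_carrier)
next
  fix x y assume "x \<in> carrier S" "y \<in> carrier S"
  then show "\<phi> (x \<otimes>\<^bsub>S\<^esub> y) = \<phi> x \<otimes>\<^bsub>G\<^esub> \<phi> y"
    by (auto simp: carrier_S phi_cl mult_S eval_append)
qed

sublocale ph: group_hom S G \<phi>
  by (simp add: group_hom.intro group_hom_axioms.intro phi_hom S.group_axioms G.group_axioms)

lemma iota_in: "F \<in> Fam \<Longrightarrow> f \<in> F \<Longrightarrow> \<iota> F f \<in> carrier S"
  by (auto simp: \<iota>_def intro!: cl_in simp: wrds_def)

lemma phi_iota: "F \<in> Fam \<Longrightarrow> f \<in> F \<Longrightarrow> \<phi> (\<iota> F f) = f"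
  by (auto simp: \<iota>_def phi_cl wrds_def sub_carrier)

lemma iota_mult: "F \<in> Fam \<Longrightarrow> x \<in> F \<Longrightarrow> y \<in> F \<Longrightarrow> \<iota> F x \<otimes>\<^bsub>S\<^esub> \<iota> F y = \<iota> F (x \<otimes>\<^bsub>G\<^esub> y)"
proof -
  assume F: "F \<in> Fam" and x: "x \<in> F" and y: "y \<in> F"
  have xy: "x \<otimes>\<^bsub>G\<^esub> y \<in> F" using subgroup.m_closed[OF sub[OF F] x y] .
  let ?r = "[((F, x), True), ((F, y), True), ((F, x \<otimes>\<^bsub>G\<^esub> y), False)]"
  have r: "?r \<in> Ra" using F x y unfolding as_rels_def by blast
  have "cl ?r = \<one>\<^bsub>S\<^esub>" using cls_rel[OF r rels_words[OF r]] by (simp add: active_sum_def)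
  moreover have "cl ?r = \<iota> F x \<otimes>\<^bsub>S\<^esub> \<iota> F y \<otimes>\<^bsub>S\<^esub> inv\<^bsub>S\<^esub> (\<iota> F (x \<otimes>\<^bsub>G\<^esub> y))"
  proof -
    have "cl ?r = cl ([((F, x), True)] @ [((F, y), True)]) \<otimes>\<^bsub>S\<^esub> cl [((F, x \<otimes>\<^bsub>G\<^esub> y), False)]"
      using F x y xy by (subst mult_S) (auto simp: wrds_def)
    also have "\<dots> = \<iota> F x \<otimes>\<^bsub>S\<^esub> \<iota> F y \<otimes>\<^bsub>S\<^esub> cl [((F, x \<otimes>\<^bsub>G\<^esub> y), False)]"
      using F x y xy by (subst mult_S[symmetric]) (auto simp: wrds_def \<iota>_def)
    finally show ?thesis using F x y xy cls_letter_inv[of "(F, x \<otimes>\<^bsub>G\<^esub> y)" Xa Ra True]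
      by (simp add: \<iota>_def active_sum_def)
  qed
  ultimately show ?thesis using iota_in F x y xy
    by (metis S.inv_equality S.inv_inv S.m_closed S.inv_closed S.r_inv S.m_assoc S.r_one)
qed

lemma iota_one: "F \<in> Fam \<Longrightarrow> \<iota> F \<one>\<^bsub>G\<^esub> = \<one>\<^bsub>S\<^esub>"
proof -
  assume F: "F \<in> Fam"
  have o: "\<one>\<^bsub>G\<^esub> \<in> F" using subgroup.one_closed[OF sub[OF F]] .
  have "\<iota> F \<one>\<^bsub>G\<^esub> \<otimes>\<^bsub>S\<^esub> \<iota> F \<one>\<^bsub>G\<^esub> = \<iota> F \<one>\<^bsub>G\<^esub>" using iota_mult[OF F o o] by simp
  then show ?thesis using iota_in[OF F o] by (metis S.l_cancel_one' S.one_closed S.r_one)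
qed

lemma iota_inv: "F \<in> Fam \<Longrightarrow> x \<in> F \<Longrightarrow> \<iota> F (inv\<^bsub>G\<^esub> x) = inv\<^bsub>S\<^esub> (\<iota> F x)"
proof -
  assume F: "F \<in> Fam" and x: "x \<in> F"
  have ix: "inv\<^bsub>G\<^esub> x \<in> F" using subgroup.m_inv_closed[OF sub[OF F] x] .
  have "\<iota> F (inv\<^bsub>G\<^esub> x) \<otimes>\<^bsub>S\<^esub> \<iota> F x = \<one>\<^bsub>S\<^esub>"
    using iota_mult[OF F ix x] iota_one[OF F] sub_carrier[OF F x] by simp
  then show ?thesis using iota_in[OF F x] iota_in[OF F ix] by (simp add: S.inv_equality)
qed

lemma letter_cl: "F \<in> Fam \<Longrightarrow> x \<in> F \<Longrightarrow> cl [((F, x), b)] = \<iota> F (if b then x else inv\<^bsub>G\<^esub> x)"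
proof (cases b)
  case True then show ?thesis by (simp add: \<iota>_def)
next
  case False
  assume F: "F \<in> Fam" and x: "x \<in> F"
  then show ?thesis using False cls_letter_inv[of "(F, x)" Xa Ra True] iota_inv[OF F x]
    by (simp add: \<iota>_def active_sum_def)
qed

lemma S_induct[consumes 1, case_names one step]:
  assumes s: "s \<in> carrier S"
    and one: "P \<one>\<^bsub>S\<^esub>"
    and step: "\<And>F f s. F \<in> Fam \<Longrightarrow> f \<in> F \<Longrightarrow> s \<in> carrier S \<Longrightarrow> P s \<Longrightarrow> P (\<iota> F f \<otimes>\<^bsub>S\<^esub> s)"
  shows "P s"
proof -
  obtain w where w: "w \<in> wrds Xa" "s = cl w" using s by (auto simp: carrier_S)
  have "P (cl w)" using w(1)
  proof (induct w)
    case Nil then show ?case using one by (simp add: one_S)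
  next
    case (Cons l w)
    obtain F x b where l: "l = ((F, x), b)" by (metis prod.collapse)
    have F: "F \<in> Fam" "x \<in> F" "w \<in> wrds Xa" using Cons l by auto
    have "cl (l # w) = cl [l] \<otimes>\<^bsub>S\<^esub> cl w" using mult_S[of "[l]" w] F l by (simp add: wrds_def)
    also have "\<dots> = \<iota> F (if b then x else inv\<^bsub>G\<^esub> x) \<otimes>\<^bsub>S\<^esub> cl w" using letter_cl F l by simp
    finally show ?case using step[OF F(1) _ cl_in[OF F(3)] Cons(1)[OF F(3)]] F
      subgroup.m_inv_closed[OF sub[OF F(1)] F(2)] by auto
  qed
  then show ?thesis using w by simp
qed

end



lemma (in group) inv_equality_helper:
  "x \<otimes> inv y = \<one> \<Longrightarrow> x \<in> carrier G \<Longrightarrow> y \<in> carrier G \<Longrightarrow> x = y"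
  by (metis inv_closed inv_equality inv_inv)

context asetup begin

lemma cl_nil: "cl [] = \<one>\<^bsub>S\<^esub>" by (simp add: one_S)

lemma cl_cons: "fst l \<in> Xa \<Longrightarrow> m # w \<in> wrds Xa \<Longrightarrow> cl (l # m # w) = cl [l] \<otimes>\<^bsub>S\<^esub> cl (m # w)"
  using mult_S[of "[l]" "m # w"] by (simp add: wrds_def)

lemma conj_rel:
  assumes F1: "F1 \<in> Fam" and F2: "F2 \<in> Fam" and h: "h \<in> F1" and g: "g \<in> F2"
  shows "inv\<^bsub>S\<^esub> (\<iota> F1 h) \<otimes>\<^bsub>S\<^esub> \<iota> F2 g \<otimes>\<^bsub>S\<^esub> \<iota> F1 h
       = \<iota> (conj_set G F2 h) (inv\<^bsub>G\<^esub> h \<otimes>\<^bsub>G\<^esub> g \<otimes>\<^bsub>G\<^esub> h)"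
proof -
  have hG: "h \<in> carrier G" using sub_carrier F1 h by blast
  let ?F3 = "conj_set G F2 h" and ?k = "inv\<^bsub>G\<^esub> h \<otimes>\<^bsub>G\<^esub> g \<otimes>\<^bsub>G\<^esub> h"
  have F3: "?F3 \<in> Fam" using conj_in F2 hG by blast
  have k: "?k \<in> ?F3" using conj_mem g by blast
  let ?r = "[((F1, h), False), ((F2, g), True), ((F1, h), True), ((?F3, ?k), False)]"
  have r: "?r \<in> Ra" using F1 F2 h g unfolding as_rels_def by blast
  have "cl ?r = \<one>\<^bsub>S\<^esub>" using cls_rel[OF r rels_words[OF r]] by (simp add: active_sum_def)
  moreover have "cl ?r = \<iota> F1 (inv\<^bsub>G\<^esub> h) \<otimes>\<^bsub>S\<^esub> (\<iota> F2 g \<otimes>\<^bsub>S\<^esub> (\<iota> F1 h \<otimes>\<^bsub>S\<^esub>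
      \<iota> ?F3 (inv\<^bsub>G\<^esub> ?k)))"
    using F1 F2 h g F3 k by (simp add: cl_cons letter_cl)
  ultimately have e: "\<iota> F1 (inv\<^bsub>G\<^esub> h) \<otimes>\<^bsub>S\<^esub> (\<iota> F2 g \<otimes>\<^bsub>S\<^esub> (\<iota> F1 h \<otimes>\<^bsub>S\<^esub>
      inv\<^bsub>S\<^esub> (\<iota> ?F3 ?k))) = \<one>\<^bsub>S\<^esub>"
    using iota_inv[OF F3 k] iota_in[OF F3 k] by simp
  have i1: "\<iota> F1 (inv\<^bsub>G\<^esub> h) = inv\<^bsub>S\<^esub> (\<iota> F1 h)" using iota_inv[OF F1 h] .
  have c: "\<iota> F1 h \<in> carrier S" "\<iota> F2 g \<in> carrier S" "\<iota> ?F3 ?k \<in> carrier S"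
    using iota_in F1 F2 F3 h g k by auto
  have "(inv\<^bsub>S\<^esub> (\<iota> F1 h) \<otimes>\<^bsub>S\<^esub> \<iota> F2 g \<otimes>\<^bsub>S\<^esub> \<iota> F1 h) \<otimes>\<^bsub>S\<^esub> inv\<^bsub>S\<^esub> (\<iota> ?F3 ?k) = \<one>\<^bsub>S\<^esub>"
    using e c by (simp add: i1 S.m_assoc)
  from S.inv_equality_helper[OF this] show ?thesis using c by simp
qed

lemma conj_set_one: "F \<subseteq> carrier G \<Longrightarrow> conj_set G F \<one>\<^bsub>G\<^esub> = F"
proof -
  assume F: "F \<subseteq> carrier G"
  have "\<And>g. g \<in> F \<Longrightarrow> inv\<^bsub>G\<^esub> \<one>\<^bsub>G\<^esub> \<otimes>\<^bsub>G\<^esub> g \<otimes>\<^bsub>G\<^esub> \<one>\<^bsub>G\<^esub> = g"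
    using F by auto
  then show ?thesis unfolding conj_set_def by simp
qed

lemma conj_set_comp: "F \<subseteq> carrier G \<Longrightarrow> a \<in> carrier G \<Longrightarrow> b \<in> carrier G \<Longrightarrow>
  conj_set G (conj_set G F a) b = conj_set G F (a \<otimes>\<^bsub>G\<^esub> b)"
  unfolding conj_set_def image_image
  by (intro image_cong refl) (auto simp: G.inv_mult_group G.m_assoc subsetD)

lemma conj_iota:
  assumes s: "s \<in> carrier S"
  shows "\<And>F f. F \<in> Fam \<Longrightarrow> f \<in> F \<Longrightarrow> inv\<^bsub>S\<^esub> s \<otimes>\<^bsub>S\<^esub> \<iota> F f \<otimes>\<^bsub>S\<^esub> s
     = \<iota> (conj_set G F (\<phi> s)) (inv\<^bsub>G\<^esub> (\<phi> s) \<otimes>\<^bsub>G\<^esub> f \<otimes>\<^bsub>G\<^esub> \<phi> s)"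
  using s
proof (induct rule: S_induct)
  case one
  then show ?case using iota_in[OF one] conj_set_one[OF subgroup.subset[OF sub[OF one(1)]]]
      sub_carrier[OF one] by simp
next
  case (step F1 h s' F f)
  have hG: "h \<in> carrier G" using sub_carrier step by blast
  have fG: "f \<in> carrier G" using sub_carrier step by blast
  have ih: "\<iota> F1 h \<in> carrier S" using iota_in step by blast
  have c: "\<iota> F f \<in> carrier S" using iota_in step by blast
  let ?F3 = "conj_set G F h" and ?k = "inv\<^bsub>G\<^esub> h \<otimes>\<^bsub>G\<^esub> f \<otimes>\<^bsub>G\<^esub> h"
  have F3: "?F3 \<in> Fam" using conj_in step hG by blast
  have k: "?k \<in> ?F3" using conj_mem step by blast
  have ps: "\<phi> s' \<in> carrier G" using step ph.hom_closed by blast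
  have "inv\<^bsub>S\<^esub> (\<iota> F1 h \<otimes>\<^bsub>S\<^esub> s') \<otimes>\<^bsub>S\<^esub> \<iota> F f \<otimes>\<^bsub>S\<^esub> (\<iota> F1 h \<otimes>\<^bsub>S\<^esub> s')
      = inv\<^bsub>S\<^esub> s' \<otimes>\<^bsub>S\<^esub> (inv\<^bsub>S\<^esub> (\<iota> F1 h) \<otimes>\<^bsub>S\<^esub> \<iota> F f \<otimes>\<^bsub>S\<^esub> \<iota> F1 h) \<otimes>\<^bsub>S\<^esub> s'"
    using ih c step by (simp add: S.inv_mult_group S.m_assoc)
  also have "\<dots> = inv\<^bsub>S\<^esub> s' \<otimes>\<^bsub>S\<^esub> \<iota> ?F3 ?k \<otimes>\<^bsub>S\<^esub> s'"
    using conj_rel step by simp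
  also have "\<dots> = \<iota> (conj_set G ?F3 (\<phi> s')) (inv\<^bsub>G\<^esub> (\<phi> s') \<otimes>\<^bsub>G\<^esub> ?k \<otimes>\<^bsub>G\<^esub> \<phi> s')"
    using step(4)[OF F3 k] .
  also have "conj_set G ?F3 (\<phi> s') = conj_set G F (\<phi> (\<iota> F1 h \<otimes>\<^bsub>S\<^esub> s'))"
    using conj_set_comp[OF subgroup.subset[OF sub[OF step(5)]] hG ps] phi_iota step ih by simp
  also have "inv\<^bsub>G\<^esub> (\<phi> s') \<otimes>\<^bsub>G\<^esub> ?k \<otimes>\<^bsub>G\<^esub> \<phi> s'
     = inv\<^bsub>G\<^esub> (\<phi> (\<iota> F1 h \<otimes>\<^bsub>S\<^esub> s')) \<otimes>\<^bsub>G\<^esub> f \<otimes>\<^bsub>G\<^esub> \<phi> (\<iota> F1 h \<otimes>\<^bsub>S\<^esub> s')"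
    using phi_iota step ih hG fG ps by (simp add: G.inv_mult_group G.m_assoc)
  finally show ?case .
qed

lemma phi_surj: "\<phi> ` carrier S = carrier G" if gen: "generating G Fam"
proof
  show "\<phi> ` carrier S \<subseteq> carrier G" using ph.hom_closed by blast
  have "\<Union>Fam \<subseteq> \<phi> ` carrier S"
  proof
    fix x assume "x \<in> \<Union>Fam"
    then obtain F where "F \<in> Fam" "x \<in> F" by blast
    then show "x \<in> \<phi> ` carrier S" using phi_iota[of F x] iota_in[of F x] by (auto intro: image_eqI[where x="\<iota> F x"])
  qed
  then have "generate G (\<Union>Fam) \<subseteq> \<phi> ` carrier S"
    using G.generate_subgroup_incl ph.img_is_subgroup by blast
  then show "carrier G \<subseteq> \<phi> ` carrier S" using gen by (simp add: generating_def)
qed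

lemma central_lift:
  assumes s: "s \<in> carrier S" and z: "\<And>x. x \<in> carrier G \<Longrightarrow> \<phi> s \<otimes>\<^bsub>G\<^esub> x = x \<otimes>\<^bsub>G\<^esub> \<phi> s"
    and y: "y \<in> carrier S"
  shows "s \<otimes>\<^bsub>S\<^esub> y = y \<otimes>\<^bsub>S\<^esub> s"
proof -
  have zc: "\<phi> s \<in> carrier G" using s ph.hom_closed by blast
  have gen: "\<iota> F f \<otimes>\<^bsub>S\<^esub> s = s \<otimes>\<^bsub>S\<^esub> \<iota> F f" if F: "F \<in> Fam" "f \<in> F" for F f
  proof -
    have fc: "f \<in> carrier G" using sub_carrier F by blast
    have cs: "conj_set G F (\<phi> s) = F"
      unfolding conj_set_def
    proof -
      have "\<And>g. g \<in> F \<Longrightarrow> inv\<^bsub>G\<^esub> (\<phi> s) \<otimes>\<^bsub>G\<^esub> g \<otimes>\<^bsub>G\<^esub> \<phi> s = g"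
      proof -
        fix g assume g: "g \<in> F"
        have gc: "g \<in> carrier G" using sub_carrier F g by blast
        have "inv\<^bsub>G\<^esub> (\<phi> s) \<otimes>\<^bsub>G\<^esub> g \<otimes>\<^bsub>G\<^esub> \<phi> s = inv\<^bsub>G\<^esub> (\<phi> s) \<otimes>\<^bsub>G\<^esub> (g \<otimes>\<^bsub>G\<^esub> \<phi> s)"
          using gc zc by (simp add: G.m_assoc)
        also have "\<dots> = inv\<^bsub>G\<^esub> (\<phi> s) \<otimes>\<^bsub>G\<^esub> (\<phi> s \<otimes>\<^bsub>G\<^esub> g)" using z[OF gc] by simp
        also have "\<dots> = g" using gc zc by (simp add: G.cancel_simps)
        finally show "inv\<^bsub>G\<^esub> (\<phi> s) \<otimes>\<^bsub>G\<^esub> g \<otimes>\<^bsub>G\<^esub> \<phi> s = g" .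
      qed
      then show "(\<lambda>g. inv\<^bsub>G\<^esub> \<phi> s \<otimes>\<^bsub>G\<^esub> g \<otimes>\<^bsub>G\<^esub> \<phi> s) ` F = F" by simp
    qed
    have "inv\<^bsub>G\<^esub> (\<phi> s) \<otimes>\<^bsub>G\<^esub> f \<otimes>\<^bsub>G\<^esub> \<phi> s = f"
    proof -
      have "inv\<^bsub>G\<^esub> (\<phi> s) \<otimes>\<^bsub>G\<^esub> f \<otimes>\<^bsub>G\<^esub> \<phi> s = inv\<^bsub>G\<^esub> (\<phi> s) \<otimes>\<^bsub>G\<^esub> (f \<otimes>\<^bsub>G\<^esub> \<phi> s)"
        using fc zc by (simp add: G.m_assoc)
      also have "\<dots> = inv\<^bsub>G\<^esub> (\<phi> s) \<otimes>\<^bsub>G\<^esub> (\<phi> s \<otimes>\<^bsub>G\<^esub> f)" using z[OF fc] by simp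
      also have "\<dots> = f" using fc zc by (simp add: G.cancel_simps)
      finally show ?thesis .
    qed
    then have e: "inv\<^bsub>S\<^esub> s \<otimes>\<^bsub>S\<^esub> \<iota> F f \<otimes>\<^bsub>S\<^esub> s = \<iota> F f"
      using conj_iota[OF s F] cs by simp
    have c: "\<iota> F f \<in> carrier S" using iota_in F by blast
    have "s \<otimes>\<^bsub>S\<^esub> (inv\<^bsub>S\<^esub> s \<otimes>\<^bsub>S\<^esub> \<iota> F f \<otimes>\<^bsub>S\<^esub> s) = \<iota> F f \<otimes>\<^bsub>S\<^esub> s"
      using c s by (simp add: S.m_assoc S.cancel_simps)
    then show ?thesis using e by simp
  qed
  show ?thesis using y
  proof (induct rule: S_induct)
    case one then show ?case using s by simp
  next
    case (step F f y')
    have c: "\<iota> F f \<in> carrier S" using iota_in step by blast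
    have "s \<otimes>\<^bsub>S\<^esub> (\<iota> F f \<otimes>\<^bsub>S\<^esub> y') = (s \<otimes>\<^bsub>S\<^esub> \<iota> F f) \<otimes>\<^bsub>S\<^esub> y'"
      using c s step by (simp add: S.m_assoc)
    also have "\<dots> = (\<iota> F f \<otimes>\<^bsub>S\<^esub> s) \<otimes>\<^bsub>S\<^esub> y'" using gen[OF step(1,2)] by simp
    also have "\<dots> = \<iota> F f \<otimes>\<^bsub>S\<^esub> (s \<otimes>\<^bsub>S\<^esub> y')" using c s step by (simp add: S.m_assoc)
    also have "\<dots> = \<iota> F f \<otimes>\<^bsub>S\<^esub> (y' \<otimes>\<^bsub>S\<^esub> s)" using step(4) by simp
    also have "\<dots> = (\<iota> F f \<otimes>\<^bsub>S\<^esub> y') \<otimes>\<^bsub>S\<^esub> s" using step c s by (simp add: S.m_assoc)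
    finally show ?case .
  qed
qed

end



lemma (in group) derived_coset_conj:
  assumes u: "u \<in> carrier G" and x: "x \<in> carrier G"
  shows "derived G (carrier G) #> (inv u \<otimes> x \<otimes> u) = derived G (carrier G) #> x"
proof -
  let ?D = "derived G (carrier G)"
  have sD: "subgroup ?D G" using derived_is_subgroup by blast
  let ?c = "inv u \<otimes> x \<otimes> inv (inv u) \<otimes> inv x"
  have c: "?c \<in> ?D" unfolding derived_def using u x by (blast intro: generate.incl)
  have cc: "?c \<in> carrier G" using u x by simp
  have e: "inv u \<otimes> x \<otimes> u = ?c \<otimes> x" using u x by (simp add: m_assoc)
  have "?D #> (?c \<otimes> x) = (?D #> ?c) #> x"
    using coset_mult_assoc[OF subgroup.subset[OF sD] cc x] by simp
  also have "\<dots> = ?D #> x" using coset_join2[OF cc sD c] by simp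
  finally show ?thesis using e by simp
qed

lemma (in comm_monoid) finprod_update:
  assumes fin: "finite A" and i: "i \<in> A" and a: "a \<in> carrier G" and h: "h \<in> A \<rightarrow> carrier G"
  shows "finprod G (\<lambda>E. if E = i then a \<otimes> h E else h E) A = a \<otimes> finprod G h A"
proof -
  have hc: "\<And>E. E \<in> A \<Longrightarrow> h E \<in> carrier G" using h by blast
  have "finprod G (\<lambda>E. if E = i then a \<otimes> h E else h E) A
      = finprod G (\<lambda>E. (if E = i then a else \<one>) \<otimes> h E) A"
    using h a by (intro finprod_cong') (auto simp: hc)
  also have "\<dots> = finprod G (\<lambda>E. if E = i then a else \<one>) A \<otimes> finprod G h A"
    using a h by (intro finprod_multf) auto
  also have "finprod G (\<lambda>E. if E = i then a else \<one>) A = a"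
    using finprod_singleton_swap[OF i fin, of "\<lambda>_. a"] a by auto
  finally show ?thesis .
qed

lemma (in normal) coset_setmult_absorb:
  assumes Hs: "H' \<subseteq> H" and one: "\<one> \<in> H'" and a: "a \<in> carrier G"
  shows "(H' #> a) <#> H = H #> a"
proof
  show "(H' #> a) <#> H \<subseteq> H #> a"
  proof
    fix z assume "z \<in> (H' #> a) <#> H"
    then obtain h d where h: "h \<in> H'" and d: "d \<in> H" and z: "z = (h \<otimes> a) \<otimes> d"
      unfolding set_mult_def r_coset_def by auto
    have hc: "h \<in> carrier G" and dc: "d \<in> carrier G" using h d Hs subset by auto
    have e: "z = (h \<otimes> (a \<otimes> d \<otimes> inv a)) \<otimes> a" using hc dc a z by (simp add: m_assoc)
    have "h \<otimes> (a \<otimes> d \<otimes> inv a) \<in> H" using inv_op_closed2[OF a d] h Hs by (simp add: m_closed subsetD)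
    then show "z \<in> H #> a" using e unfolding r_coset_def by blast
  qed
next
  show "H #> a \<subseteq> (H' #> a) <#> H"
  proof
    fix z assume "z \<in> H #> a"
    then obtain d where d: "d \<in> H" and z: "z = d \<otimes> a" unfolding r_coset_def by auto
    have dc: "d \<in> carrier G" using d subset by auto
    have e: "z = (\<one> \<otimes> a) \<otimes> (inv a \<otimes> d \<otimes> a)" using dc a z by (simp add: m_assoc cancel_simps)
    have "inv a \<otimes> d \<otimes> a \<in> H" using inv_op_closed1[OF a d] .
    moreover have "\<one> \<otimes> a \<in> H' #> a" using one unfolding r_coset_def by blast
    ultimately show "z \<in> (H' #> a) <#> H" using e unfolding set_mult_def by blast
  qed
qed

locale asetup2 = asetup +
  assumes gen: "generating G Fam" and reg: "regular_family G Fam"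
    and fin: "finite (carrier G)" and indep: "independent_family G Fam"
begin

abbreviation "Dg \<equiv> derived G (carrier G)"
abbreviation "Ds \<equiv> derived S (carrier S)"

lemma surj_ex: "g \<in> carrier G \<Longrightarrow> \<exists>u\<in>carrier S. \<phi> u = g"
  using phi_surj[OF gen] by (metis imageE)

lemma conj_inv_normalizer:
  assumes F: "F \<in> Fam" and b: "b \<in> normalizer G F"
  shows "b \<in> carrier G" "conj_set G F (inv\<^bsub>G\<^esub> b) = F"
proof -
  have Fc: "F \<subseteq> carrier G" using subgroup.subset[OF sub[OF F]] .
  show bc: "b \<in> carrier G" using b by (simp add: normalizer_def stabilizer_def)
  have "b <#\<^bsub>G\<^esub> F #>\<^bsub>G\<^esub> inv\<^bsub>G\<^esub> b = F" using b Fc by (simp add: normalizer_def stabilizer_def)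
  moreover have "conj_set G F (inv\<^bsub>G\<^esub> b) = b <#\<^bsub>G\<^esub> F #>\<^bsub>G\<^esub> inv\<^bsub>G\<^esub> b"
    using bc unfolding conj_set_def l_coset_def r_coset_def by auto
  ultimately show "conj_set G F (inv\<^bsub>G\<^esub> b) = F" by simp
qed

lemma reg_iota:
  assumes F: "F \<in> Fam" and x: "x \<in> F" "x \<in> Dg"
  shows "\<iota> F x \<in> Ds"
proof -
  have sF: "subgroup F G" using sub F by blast
  have sDs: "subgroup Ds S" using S.derived_is_subgroup by blast
  let ?H = "{x \<in> F. \<iota> F x \<in> Ds}"
  have sH: "subgroup ?H G"
  proof (rule G.subgroupI)
    show "?H \<subseteq> carrier G" using subgroup.subset[OF sF] by blast
    show "?H \<noteq> {}" using iota_one[OF F] subgroup.one_closed[OF sF] subgroup.one_closed[OF sDs] by auto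
  next
    fix a assume "a \<in> ?H" then show "inv\<^bsub>G\<^esub> a \<in> ?H"
      using iota_inv[OF F] subgroup.m_inv_closed[OF sF] subgroup.m_inv_closed[OF sDs] by auto
  next
    fix a b assume "a \<in> ?H" "b \<in> ?H" then show "a \<otimes>\<^bsub>G\<^esub> b \<in> ?H"
      using iota_mult[OF F, symmetric] subgroup.m_closed[OF sF] subgroup.m_closed[OF sDs] by auto
  qed
  have gens: "{a \<otimes>\<^bsub>G\<^esub> b \<otimes>\<^bsub>G\<^esub> inv\<^bsub>G\<^esub> a \<otimes>\<^bsub>G\<^esub> inv\<^bsub>G\<^esub> b | a b. a \<in> F \<and> b \<in> normalizer G F} \<subseteq> ?H"
  proof
    fix z assume "z \<in> {a \<otimes>\<^bsub>G\<^esub> b \<otimes>\<^bsub>G\<^esub> inv\<^bsub>G\<^esub> a \<otimes>\<^bsub>G\<^esub> inv\<^bsub>G\<^esub> b | a b. a \<in> F \<and> b \<in> normalizer G F}"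
    then obtain a b where a: "a \<in> F" and b: "b \<in> normalizer G F"
      and z: "z = a \<otimes>\<^bsub>G\<^esub> b \<otimes>\<^bsub>G\<^esub> inv\<^bsub>G\<^esub> a \<otimes>\<^bsub>G\<^esub> inv\<^bsub>G\<^esub> b" by blast
    have bc: "b \<in> carrier G" and cs: "conj_set G F (inv\<^bsub>G\<^esub> b) = F"
      using conj_inv_normalizer[OF F b] by auto
    have ac: "a \<in> carrier G" using sub_carrier F a by blast
    have ia: "inv\<^bsub>G\<^esub> a \<in> F" using subgroup.m_inv_closed[OF sF a] .
    obtain u where u: "u \<in> carrier S" "\<phi> u = inv\<^bsub>G\<^esub> b" using surj_ex bc by blast
    let ?y = "b \<otimes>\<^bsub>G\<^esub> inv\<^bsub>G\<^esub> a \<otimes>\<^bsub>G\<^esub> inv\<^bsub>G\<^esub> b"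
    have y: "?y \<in> F" using conj_mem[OF ia, where g="inv\<^bsub>G\<^esub> b"] cs bc by simp
    have iy: "\<iota> F ?y = inv\<^bsub>S\<^esub> u \<otimes>\<^bsub>S\<^esub> \<iota> F (inv\<^bsub>G\<^esub> a) \<otimes>\<^bsub>S\<^esub> u"
      using conj_iota[OF u(1) F ia] u cs bc by simp
    have ze: "z = a \<otimes>\<^bsub>G\<^esub> ?y" using z ac bc by (simp add: G.m_assoc)
    have zF: "z \<in> F" using ze subgroup.m_closed[OF sF a y] by simp
    have ca: "\<iota> F a \<in> carrier S" using iota_in F a by blast
    have "\<iota> F z = \<iota> F a \<otimes>\<^bsub>S\<^esub> (inv\<^bsub>S\<^esub> u \<otimes>\<^bsub>S\<^esub> inv\<^bsub>S\<^esub> (\<iota> F a) \<otimes>\<^bsub>S\<^esub> u)"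
      using ze iota_mult[OF F a y] iy iota_inv[OF F a] by simp
    also have "\<dots> = \<iota> F a \<otimes>\<^bsub>S\<^esub> inv\<^bsub>S\<^esub> u \<otimes>\<^bsub>S\<^esub> inv\<^bsub>S\<^esub> (\<iota> F a) \<otimes>\<^bsub>S\<^esub> inv\<^bsub>S\<^esub> (inv\<^bsub>S\<^esub> u)"
      using ca u by (simp add: S.m_assoc)
    finally have "\<iota> F z \<in> derived_set S (carrier S)" using ca u by blast
    then have "\<iota> F z \<in> Ds" unfolding derived_def by (blast intro: generate.incl)
    then show "z \<in> ?H" using zF by blast
  qed
  have "F \<inter> Dg = commutator_subgroup G F (normalizer G F)" using reg F by (simp add: regular_family_def)
  also have "\<dots> \<subseteq> ?H" unfolding commutator_subgroup_def using G.generate_subgroup_incl[OF gens sH] .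
  finally show ?thesis using x by blast
qed

end



context asetup2 begin

abbreviation "QS \<equiv> S Mod Ds"
abbreviation "QG \<equiv> G Mod Dg"

lemma QS_comm: "comm_group QS" using S.derived_quot_is_comm_group .
lemma QG_comm: "comm_group QG" using G.derived_quot_is_comm_group .
lemma hS: "(\<lambda>a. Ds #>\<^bsub>S\<^esub> a) \<in> hom S QS"
  using normal.r_coset_hom_Mod[OF S.derived_self_is_normal] .
lemma hG: "(\<lambda>a. Dg #>\<^bsub>G\<^esub> a) \<in> hom G QG"
  using normal.r_coset_hom_Mod[OF G.derived_self_is_normal] .

lemma hS_mult: "x \<in> carrier S \<Longrightarrow> y \<in> carrier S \<Longrightarrow> Ds #>\<^bsub>S\<^esub> (x \<otimes>\<^bsub>S\<^esub> y) = (Ds #>\<^bsub>S\<^esub> x) \<otimes>\<^bsub>QS\<^esub> (Ds #>\<^bsub>S\<^esub> y)"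
  using hom_mult[OF hS] by simp
lemma hG_mult: "x \<in> carrier G \<Longrightarrow> y \<in> carrier G \<Longrightarrow> Dg #>\<^bsub>G\<^esub> (x \<otimes>\<^bsub>G\<^esub> y) = (Dg #>\<^bsub>G\<^esub> x) \<otimes>\<^bsub>QG\<^esub> (Dg #>\<^bsub>G\<^esub> y)"
  using hom_mult[OF hG] by simp
lemma hS_closed: "x \<in> carrier S \<Longrightarrow> Ds #>\<^bsub>S\<^esub> x \<in> carrier QS"
  using hom_in_carrier[OF hS] by simp
lemma hG_closed: "x \<in> carrier G \<Longrightarrow> Dg #>\<^bsub>G\<^esub> x \<in> carrier QG"
  using hom_in_carrier[OF hG] by simp

lemma finFam: "finite Fam"
proof -
  have "Fam \<subseteq> Pow (carrier G)" using sub subgroup.subset by blast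
  moreover have "finite (Pow (carrier G))" using fin by simp
  ultimately show ?thesis by (rule finite_subset)
qed

lemma rep:
  assumes cr: "conj_reps G Fam T" and F': "F' \<in> Fam" and f': "f' \<in> F'"
  shows "\<exists>F\<in>T. \<exists>f\<in>F. Ds #>\<^bsub>S\<^esub> \<iota> F' f' = Ds #>\<^bsub>S\<^esub> \<iota> F f \<and> Dg #>\<^bsub>G\<^esub> f' = Dg #>\<^bsub>G\<^esub> f"
proof -
  have all: "\<forall>F\<in>Fam. \<exists>!F'\<in>T. \<exists>g\<in>carrier G. F = conj_set G F' g"
    using cr unfolding conj_reps_def by (rule conjunct2)
  have "\<exists>!F\<in>T. \<exists>g\<in>carrier G. F' = conj_set G F g" using bspec[OF all F'] .
  then have "\<exists>F. F \<in> T \<and> (\<exists>g\<in>carrier G. F' = conj_set G F g)" by (rule ex1_implies_ex)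
  then obtain F g where F: "F \<in> T" and g: "g \<in> carrier G" and e: "F' = conj_set G F g"
    by blast
  have FF: "F \<in> Fam" using cr F unfolding conj_reps_def by blast
  have "f' \<in> (\<lambda>x. inv\<^bsub>G\<^esub> g \<otimes>\<^bsub>G\<^esub> x \<otimes>\<^bsub>G\<^esub> g) ` F" using f' e unfolding conj_set_def by simp
  then obtain f where f: "f \<in> F" and fe: "f' = inv\<^bsub>G\<^esub> g \<otimes>\<^bsub>G\<^esub> f \<otimes>\<^bsub>G\<^esub> g"
    by (rule imageE)
  obtain u where u: "u \<in> carrier S" "\<phi> u = g" using surj_ex g by blast
  have i0: "inv\<^bsub>S\<^esub> u \<otimes>\<^bsub>S\<^esub> \<iota> F f \<otimes>\<^bsub>S\<^esub> u = \<iota> (conj_set G F (\<phi> u)) (inv\<^bsub>G\<^esub> (\<phi> u) \<otimes>\<^bsub>G\<^esub> f \<otimes>\<^bsub>G\<^esub> \<phi> u)"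
    using conj_iota[OF u(1) FF f] .
  have i: "inv\<^bsub>S\<^esub> u \<otimes>\<^bsub>S\<^esub> \<iota> F f \<otimes>\<^bsub>S\<^esub> u = \<iota> F' f'"
    unfolding i0 u(2) e[symmetric] fe[symmetric] ..
  have "Ds #>\<^bsub>S\<^esub> \<iota> F' f' = Ds #>\<^bsub>S\<^esub> \<iota> F f"
    using S.derived_coset_conj[OF u(1) iota_in[OF FF f]] unfolding i .
  moreover have "Dg #>\<^bsub>G\<^esub> f' = Dg #>\<^bsub>G\<^esub> f"
    using G.derived_coset_conj[OF g sub_carrier[OF FF f]] unfolding fe[symmetric] .
  ultimately show ?thesis using F f by blast
qed

lemma invariant:
  assumes cr: "conj_reps G Fam T" and s: "s \<in> carrier S"
  shows "\<exists>c\<in>(\<Pi>\<^sub>E F\<in>T. F). Ds #>\<^bsub>S\<^esub> s = finprod QS (\<lambda>F. Ds #>\<^bsub>S\<^esub> \<iota> F (c F)) T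
           \<and> Dg #>\<^bsub>G\<^esub> \<phi> s = finprod QG (\<lambda>F. Dg #>\<^bsub>G\<^esub> c F) T"
  using s
proof (induct rule: S_induct)
  interpret QS: comm_group QS by (rule QS_comm)
  interpret QG: comm_group QG by (rule QG_comm)
  have TF: "T \<subseteq> Fam" using cr by (simp add: conj_reps_def)
  case one
  let ?c = "\<lambda>F\<in>T. \<one>\<^bsub>G\<^esub>"
  have c: "?c \<in> (\<Pi>\<^sub>E F\<in>T. F)" using TF sub subgroup.one_closed by fastforce
  have "Ds #>\<^bsub>S\<^esub> \<one>\<^bsub>S\<^esub> = \<one>\<^bsub>QS\<^esub>"
    using S.coset_mult_one[OF subgroup.subset[OF S.derived_is_subgroup]] by (simp add: FactGroup_def)
  moreover have "finprod QS (\<lambda>F. Ds #>\<^bsub>S\<^esub> \<iota> F (?c F)) T = \<one>\<^bsub>QS\<^esub>"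
    using TF iota_one S.coset_mult_one[OF subgroup.subset[OF S.derived_is_subgroup]]
    by (intro QS.finprod_one_eqI) (auto simp: FactGroup_def)
  moreover have "Dg #>\<^bsub>G\<^esub> \<phi> \<one>\<^bsub>S\<^esub> = \<one>\<^bsub>QG\<^esub>"
    using G.coset_mult_one[OF subgroup.subset[OF G.derived_is_subgroup]] by (simp add: FactGroup_def)
  moreover have "finprod QG (\<lambda>F. Dg #>\<^bsub>G\<^esub> ?c F) T = \<one>\<^bsub>QG\<^esub>"
    using G.coset_mult_one[OF subgroup.subset[OF G.derived_is_subgroup]]
    by (intro QG.finprod_one_eqI) (auto simp: FactGroup_def)
  ultimately show ?case using c by (intro bexI[of _ ?c]) simp_all
next
  interpret QS: comm_group QS by (rule QS_comm)
  interpret QG: comm_group QG by (rule QG_comm)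
  have TF: "T \<subseteq> Fam" using cr by (simp add: conj_reps_def)
  have finT: "finite T" using TF finFam rev_finite_subset by blast
  case (step F' f' s')
  obtain c where c: "c \<in> (\<Pi>\<^sub>E F\<in>T. F)"
    and eS: "Ds #>\<^bsub>S\<^esub> s' = finprod QS (\<lambda>F. Ds #>\<^bsub>S\<^esub> \<iota> F (c F)) T"
    and eG: "Dg #>\<^bsub>G\<^esub> \<phi> s' = finprod QG (\<lambda>F. Dg #>\<^bsub>G\<^esub> c F) T" using step(4) by blast
  obtain F f where F: "F \<in> T" and f: "f \<in> F"
    and rS: "Ds #>\<^bsub>S\<^esub> \<iota> F' f' = Ds #>\<^bsub>S\<^esub> \<iota> F f" and rG: "Dg #>\<^bsub>G\<^esub> f' = Dg #>\<^bsub>G\<^esub> f"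
    using rep[OF cr step(1,2)] by blast
  have FF: "F \<in> Fam" using F TF by blast
  have cE: "\<And>E. E \<in> T \<Longrightarrow> c E \<in> E" using c by blast
  have cEF: "\<And>E. E \<in> T \<Longrightarrow> E \<in> Fam" using TF by blast
  have cEc: "\<And>E. E \<in> T \<Longrightarrow> c E \<in> carrier G" using cE cEF sub_carrier by blast
  let ?c = "\<lambda>E\<in>T. if E = F then f \<otimes>\<^bsub>G\<^esub> c E else c E"
  have fc: "f \<otimes>\<^bsub>G\<^esub> c F \<in> F" using subgroup.m_closed[OF sub[OF FF] f cE[OF F]] .
  have c': "?c \<in> (\<Pi>\<^sub>E F\<in>T. F)" using cE fc by auto
  have PS: "(\<lambda>E. Ds #>\<^bsub>S\<^esub> \<iota> E (c E)) \<in> T \<rightarrow> carrier QS"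
    using hS_closed iota_in cE cEF by blast
  have PG: "(\<lambda>E. Dg #>\<^bsub>G\<^esub> c E) \<in> T \<rightarrow> carrier QG"
    using hG_closed cEc by blast
  have a1: "Ds #>\<^bsub>S\<^esub> (\<iota> F' f' \<otimes>\<^bsub>S\<^esub> s') = (Ds #>\<^bsub>S\<^esub> \<iota> F f) \<otimes>\<^bsub>QS\<^esub> finprod QS (\<lambda>F. Ds #>\<^bsub>S\<^esub> \<iota> F (c F)) T"
    using hS_mult[OF iota_in[OF step(1,2)] step(3)] rS eS by simp
  also have "\<dots> = finprod QS (\<lambda>E. if E = F then (Ds #>\<^bsub>S\<^esub> \<iota> F f) \<otimes>\<^bsub>QS\<^esub> (Ds #>\<^bsub>S\<^esub> \<iota> E (c E))
        else Ds #>\<^bsub>S\<^esub> \<iota> E (c E)) T"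
    using QS.finprod_update[OF finT F hS_closed[OF iota_in[OF FF f]] PS] by simp
  also have "\<dots> = finprod QS (\<lambda>E. Ds #>\<^bsub>S\<^esub> \<iota> E (?c E)) T"
  proof (intro QS.finprod_cong')
    show "(\<lambda>E. Ds #>\<^bsub>S\<^esub> \<iota> E (?c E)) \<in> T \<rightarrow> carrier QS"
      using hS_closed iota_in c' cEF by (auto simp: PiE_def Pi_def)
  next
    fix E assume E: "E \<in> T"
    show "(if E = F then (Ds #>\<^bsub>S\<^esub> \<iota> F f) \<otimes>\<^bsub>QS\<^esub> (Ds #>\<^bsub>S\<^esub> \<iota> E (c E)) else Ds #>\<^bsub>S\<^esub> \<iota> E (c E))
       = Ds #>\<^bsub>S\<^esub> \<iota> E (?c E)"
      using E iota_mult[OF FF f cE[OF F]] hS_mult[OF iota_in[OF FF f] iota_in[OF FF cE[OF F]]] by auto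
  qed simp
  finally have A: "Ds #>\<^bsub>S\<^esub> (\<iota> F' f' \<otimes>\<^bsub>S\<^esub> s') = finprod QS (\<lambda>E. Ds #>\<^bsub>S\<^esub> \<iota> E (?c E)) T" .
  have fG': "f' \<in> carrier G" using sub_carrier step by blast
  have fG: "f \<in> carrier G" using sub_carrier FF f by blast
  have "Dg #>\<^bsub>G\<^esub> \<phi> (\<iota> F' f' \<otimes>\<^bsub>S\<^esub> s') = (Dg #>\<^bsub>G\<^esub> f) \<otimes>\<^bsub>QG\<^esub> finprod QG (\<lambda>F. Dg #>\<^bsub>G\<^esub> c F) T"
    using hG_mult[OF fG' ph.hom_closed[OF step(3)]] rG eG phi_iota[OF step(1,2)] iota_in[OF step(1,2)] step(3)
    by simp
  also have "\<dots> = finprod QG (\<lambda>E. if E = F then (Dg #>\<^bsub>G\<^esub> f) \<otimes>\<^bsub>QG\<^esub> (Dg #>\<^bsub>G\<^esub> c E)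
        else Dg #>\<^bsub>G\<^esub> c E) T"
    using QG.finprod_update[OF finT F hG_closed[OF fG] PG] by simp
  also have "\<dots> = finprod QG (\<lambda>E. Dg #>\<^bsub>G\<^esub> ?c E) T"
  proof (intro QG.finprod_cong')
    show "(\<lambda>E. Dg #>\<^bsub>G\<^esub> ?c E) \<in> T \<rightarrow> carrier QG"
    proof
      fix E assume E: "E \<in> T"
      have "?c E \<in> E" using c' E by blast
      then show "Dg #>\<^bsub>G\<^esub> ?c E \<in> carrier QG" using hG_closed sub_carrier cEF E by blast
    qed
  next
    fix E assume E: "E \<in> T"
    show "(if E = F then (Dg #>\<^bsub>G\<^esub> f) \<otimes>\<^bsub>QG\<^esub> (Dg #>\<^bsub>G\<^esub> c E) else Dg #>\<^bsub>G\<^esub> c E)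
       = Dg #>\<^bsub>G\<^esub> ?c E"
      using E hG_mult[OF fG cEc[OF F]] by auto
  qed simp
  finally show ?case using A c' by blast
qed

end



context asetup2 begin

lemma rcosets_sub: "rcosets\<^bsub>G\<lparr>carrier := F\<rparr>\<^esub> H = (\<Union>a\<in>F. {H #>\<^bsub>G\<^esub> a})"
  unfolding RCOSETS_def r_coset_def by simp

lemma abel:
  assumes s: "s \<in> carrier S" and ps: "\<phi> s \<in> Dg"
  shows "s \<in> Ds"
proof -
  interpret QS: comm_group QS by (rule QS_comm)
  interpret QG: comm_group QG by (rule QG_comm)
  interpret ND: normal Dg G by (rule G.derived_self_is_normal)
  obtain T where cr: "conj_reps G Fam T" and
    iso: "indep_map G T \<in> iso (product_group T (\<lambda>F. (G\<lparr>carrier := F\<rparr>) Mod (F \<inter> Dg))) QG"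
    using indep unfolding independent_family_def by blast
  let ?P = "product_group T (\<lambda>F. (G\<lparr>carrier := F\<rparr>) Mod (F \<inter> Dg))"
  have TF: "T \<subseteq> Fam" using cr by (simp add: conj_reps_def)
  have finT: "finite T" using TF finFam rev_finite_subset by blast
  obtain c where c: "c \<in> (\<Pi>\<^sub>E F\<in>T. F)"
    and eS: "Ds #>\<^bsub>S\<^esub> s = finprod QS (\<lambda>F. Ds #>\<^bsub>S\<^esub> \<iota> F (c F)) T"
    and eG: "Dg #>\<^bsub>G\<^esub> \<phi> s = finprod QG (\<lambda>F. Dg #>\<^bsub>G\<^esub> c F) T"
    using invariant[OF cr s] by blast
  have cE: "\<And>E. E \<in> T \<Longrightarrow> c E \<in> E" using c by blast
  have cEF: "\<And>E. E \<in> T \<Longrightarrow> E \<in> Fam" using TF by blast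
  have cEc: "\<And>E. E \<in> T \<Longrightarrow> c E \<in> carrier G" using cE cEF sub_carrier by blast
  have sDg: "subgroup Dg G" using G.derived_is_subgroup by blast
  have DgC: "Dg \<subseteq> carrier G" using subgroup.subset[OF sDg] .
  have psc: "\<phi> s \<in> carrier G" using ph.hom_closed[OF s] .
  have one1: "Dg #>\<^bsub>G\<^esub> \<phi> s = \<one>\<^bsub>QG\<^esub>" using G.coset_join2[OF psc sDg ps] by (simp add: FactGroup_def)
  define cc where "cc = (\<lambda>F\<in>T. (F \<inter> Dg) #>\<^bsub>G\<^esub> c F)"
  define o1 where "o1 = (\<lambda>F\<in>T. (F \<inter> Dg) #>\<^bsub>G\<^esub> \<one>\<^bsub>G\<^esub>)"
  have oneF: "\<And>F. F \<in> T \<Longrightarrow> \<one>\<^bsub>G\<^esub> \<in> F" using cEF sub subgroup.one_closed by blast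
  have oneD: "\<one>\<^bsub>G\<^esub> \<in> Dg" using subgroup.one_closed[OF sDg] .
  have ccP: "cc \<in> carrier ?P"
    unfolding cc_def using cE by (auto simp: FactGroup_def rcosets_sub)
  have o1P: "o1 \<in> carrier ?P"
    unfolding o1_def using oneF by (auto simp: FactGroup_def rcosets_sub)
  have abs: "\<And>F a. F \<in> T \<Longrightarrow> a \<in> carrier G \<Longrightarrow> ((F \<inter> Dg) #>\<^bsub>G\<^esub> a) <#>\<^bsub>G\<^esub> Dg = Dg #>\<^bsub>G\<^esub> a"
    using ND.coset_setmult_absorb oneF oneD by blast
  have "indep_map G T cc = finprod QG (\<lambda>F. Dg #>\<^bsub>G\<^esub> c F) T"
    unfolding indep_map_def
  proof (intro QG.finprod_cong')
    show "(\<lambda>F. Dg #>\<^bsub>G\<^esub> c F) \<in> T \<rightarrow> carrier QG" using hG_closed cEc by blast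
  next
    fix F assume F: "F \<in> T"
    show "cc F <#>\<^bsub>G\<^esub> Dg = Dg #>\<^bsub>G\<^esub> c F" using abs[OF F cEc[OF F]] F by (simp add: cc_def)
  qed simp
  then have i1: "indep_map G T cc = \<one>\<^bsub>QG\<^esub>" using eG one1 by simp
  have "indep_map G T o1 = finprod QG (\<lambda>F. \<one>\<^bsub>QG\<^esub>) T"
    unfolding indep_map_def
  proof (intro QG.finprod_cong')
    fix F assume F: "F \<in> T"
    show "o1 F <#>\<^bsub>G\<^esub> Dg = \<one>\<^bsub>QG\<^esub>" using abs[OF F G.one_closed] F DgC
      by (simp add: o1_def FactGroup_def)
  qed (use QG.one_closed in auto)
  then have i2: "indep_map G T o1 = \<one>\<^bsub>QG\<^esub>" using QG.finprod_one[of T] by simp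
  have inj: "inj_on (indep_map G T) (carrier ?P)"
    using iso unfolding iso_def bij_betw_def by blast
  have cco: "cc = o1" using inj_onD[OF inj _ ccP o1P] i1 i2 by simp
  have cD: "c F \<in> F \<inter> Dg" if F: "F \<in> T" for F
  proof -
    have FDc: "F \<inter> Dg \<subseteq> carrier G" using DgC by blast
    have "(F \<inter> Dg) #>\<^bsub>G\<^esub> c F = F \<inter> Dg"
      using fun_cong[OF cco, of F] F G.coset_mult_one[OF FDc] by (simp add: cc_def o1_def)
    moreover have "c F \<in> (F \<inter> Dg) #>\<^bsub>G\<^esub> c F"
      using oneF[OF F] oneD cEc[OF F] unfolding r_coset_def by force
    ultimately show ?thesis by simp
  qed
  have "finprod QS (\<lambda>F. Ds #>\<^bsub>S\<^esub> \<iota> F (c F)) T = \<one>\<^bsub>QS\<^esub>"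
  proof (intro QS.finprod_one_eqI)
    fix F assume F: "F \<in> T"
    have "\<iota> F (c F) \<in> Ds" using reg_iota[OF cEF[OF F]] cD[OF F] by blast
    then show "Ds #>\<^bsub>S\<^esub> \<iota> F (c F) = \<one>\<^bsub>QS\<^esub>"
      using S.coset_join2[OF iota_in[OF cEF[OF F] cE[OF F]] S.derived_is_subgroup]
      by (simp add: FactGroup_def)
  qed
  then have "Ds #>\<^bsub>S\<^esub> s = Ds" using eS by (simp add: FactGroup_def)
  then show ?thesis using S.rcos_self[OF s S.derived_is_subgroup[OF subset_refl]] by simp
qed

end



lemma (in group) comm_inv: "x \<in> carrier G \<Longrightarrow> y \<in> carrier G \<Longrightarrow> x \<otimes> y = y \<otimes> x \<Longrightarrow> inv x \<otimes> y = y \<otimes> inv x"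
  by (metis inv_closed m_assoc m_closed r_inv r_one l_inv l_one)

lemma (in group) comm_assoc: "x \<in> carrier G \<Longrightarrow> y \<in> carrier G \<Longrightarrow> z \<in> carrier G \<Longrightarrow> x \<otimes> y = y \<otimes> x \<Longrightarrow> x \<otimes> (y \<otimes> z) = y \<otimes> (x \<otimes> z)"
  by (simp add: m_assoc[symmetric])

lemma (in group) delta_mult:
  assumes c: "m1 \<in> carrier G" "m2 \<in> carrier G" "t \<in> carrier G"
    and h1: "(t \<otimes> inv m1 \<otimes> inv t) \<otimes> m2 = m2 \<otimes> (t \<otimes> inv m1 \<otimes> inv t)"
    and h2: "(t \<otimes> inv m1 \<otimes> inv t) \<otimes> (t \<otimes> inv m2 \<otimes> inv t) = (t \<otimes> inv m2 \<otimes> inv t) \<otimes> (t \<otimes> inv m1 \<otimes> inv t)"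
  shows "(m1 \<otimes> t \<otimes> inv m1 \<otimes> inv t) \<otimes> (m2 \<otimes> t \<otimes> inv m2 \<otimes> inv t)
       = (m1 \<otimes> m2) \<otimes> t \<otimes> inv (m1 \<otimes> m2) \<otimes> inv t"
proof -
  let ?A = "t \<otimes> inv m1 \<otimes> inv t" and ?B = "t \<otimes> inv m2 \<otimes> inv t"
  have cA: "?A \<in> carrier G" and cB: "?B \<in> carrier G" using c by auto
  have "(m1 \<otimes> t \<otimes> inv m1 \<otimes> inv t) \<otimes> (m2 \<otimes> t \<otimes> inv m2 \<otimes> inv t) = m1 \<otimes> (?A \<otimes> (m2 \<otimes> ?B))"
    using c by (simp add: m_assoc)
  also have "\<dots> = m1 \<otimes> (m2 \<otimes> (?A \<otimes> ?B))" using h1 c cA cB by (simp add: m_assoc[symmetric])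
  also have "\<dots> = m1 \<otimes> (m2 \<otimes> (?B \<otimes> ?A))" using h2 by simp
  also have "\<dots> = (m1 \<otimes> m2) \<otimes> t \<otimes> inv (m1 \<otimes> m2) \<otimes> inv t"
    using c by (simp add: m_assoc inv_mult_group cancel_simps)
  finally show ?thesis .
qed

lemma (in group) delta_inv:
  assumes c: "m \<in> carrier G" "t \<in> carrier G"
    and h: "(t \<otimes> m \<otimes> inv t) \<otimes> inv m = inv m \<otimes> (t \<otimes> m \<otimes> inv t)"
  shows "inv (m \<otimes> t \<otimes> inv m \<otimes> inv t) = inv m \<otimes> t \<otimes> inv (inv m) \<otimes> inv t"
proof -
  have "inv (m \<otimes> t \<otimes> inv m \<otimes> inv t) = (t \<otimes> m \<otimes> inv t) \<otimes> inv m"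
    using c by (simp add: m_assoc inv_mult_group)
  also have "\<dots> = inv m \<otimes> (t \<otimes> m \<otimes> inv t)" using h .
  also have "\<dots> = inv m \<otimes> t \<otimes> inv (inv m) \<otimes> inv t" using c by (simp add: m_assoc)
  finally show ?thesis .
qed

lemma (in group) pstep:
  assumes c: "m \<in> carrier G" "t \<in> carrier G"
  shows "m \<otimes> t [^] (Suc j) \<otimes> inv m \<otimes> inv (t [^] (Suc j))
     = (m \<otimes> t [^] j \<otimes> inv m \<otimes> inv (t [^] j)) \<otimes>
       ((t [^] j \<otimes> m \<otimes> inv (t [^] j)) \<otimes> t \<otimes> inv (t [^] j \<otimes> m \<otimes> inv (t [^] j)) \<otimes> inv t)"
proof -
  have e: "t [^] (Suc j) = t \<otimes> t [^] j" using nat_pow_Suc2 c by blast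
  show ?thesis unfolding e using c by (simp add: m_assoc inv_mult_group cancel_simps)
qed

lemma (in group) comm_decomp:
  assumes c: "m1 \<in> carrier G" "m2 \<in> carrier G" "t \<in> carrier G"
    and h: "(t [^] j \<otimes> inv m1 \<otimes> inv (t [^] j)) \<otimes> (t [^] i \<otimes> m2 \<otimes> inv (t [^] i))
          = (t [^] i \<otimes> m2 \<otimes> inv (t [^] i)) \<otimes> (t [^] j \<otimes> inv m1 \<otimes> inv (t [^] j))"
  shows "(m1 \<otimes> t [^] (i::nat)) \<otimes> (m2 \<otimes> t [^] (j::nat)) \<otimes> inv (m1 \<otimes> t [^] i) \<otimes> inv (m2 \<otimes> t [^] j)
     = (m1 \<otimes> t [^] j \<otimes> inv m1 \<otimes> inv (t [^] j)) \<otimes> inv (m2 \<otimes> t [^] i \<otimes> inv m2 \<otimes> inv (t [^] i))"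
proof -
  let ?XX = "t [^] j \<otimes> inv m1 \<otimes> inv (t [^] j)" and ?Y = "t [^] i \<otimes> m2 \<otimes> inv (t [^] i)"
  have ti: "t [^] i \<in> carrier G" and tj: "t [^] j \<in> carrier G" using c by auto
  have cX: "?XX \<in> carrier G" and cY: "?Y \<in> carrier G" using c by auto
  have cm: "t [^] i \<otimes> t [^] j = t [^] j \<otimes> t [^] i" using nat_pow_comm c by blast
  have cm2: "inv (t [^] i) \<otimes> t [^] j = t [^] j \<otimes> inv (t [^] i)" using comm_inv[OF ti tj cm] .
  have cm3: "\<And>z. z \<in> carrier G \<Longrightarrow> t [^] j \<otimes> (inv (t [^] i) \<otimes> z) = inv (t [^] i) \<otimes> (t [^] j \<otimes> z)"
    using comm_assoc[OF tj inv_closed[OF ti]] cm2 by simp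
  have "(m1 \<otimes> t [^] i) \<otimes> (m2 \<otimes> t [^] j) \<otimes> inv (m1 \<otimes> t [^] i) \<otimes> inv (m2 \<otimes> t [^] j)
      = m1 \<otimes> (?Y \<otimes> (?XX \<otimes> inv m2))"
    using c ti tj by (simp add: m_assoc inv_mult_group cancel_simps cm3)
  also have "\<dots> = m1 \<otimes> (?XX \<otimes> (?Y \<otimes> inv m2))"
    using comm_assoc[OF cY cX inv_closed[OF c(2)]] h by simp
  also have "\<dots> = (m1 \<otimes> t [^] j \<otimes> inv m1 \<otimes> inv (t [^] j)) \<otimes> inv (m2 \<otimes> t [^] i \<otimes> inv m2 \<otimes> inv (t [^] i))"
    using c ti tj by (simp add: m_assoc inv_mult_group cancel_simps)
  finally show ?thesis .
qed

lemma (in monoid) sub_pow: "x [^]\<^bsub>G\<lparr>carrier := H\<rparr>\<^esub> (n::nat) = x [^] n"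
  by (simp add: nat_pow_def)

lemma cyc_pow:
  assumes grp: "group H" and fin: "finite (carrier H)" and cyc: "cyclic_group H"
  shows "\<exists>x\<in>carrier H. \<forall>y\<in>carrier H. \<exists>k::nat. y = x [^]\<^bsub>H\<^esub> k"
proof -
  obtain x where x: "x \<in> carrier H" and e: "subgroup_generated H {x} = H"
    using cyc unfolding cyclic_group_def by blast
  have "carrier H = carrier (subgroup_generated H {x})" using e by simp
  also have "\<dots> = generate H {x}" using x by (simp add: carrier_subgroup_generated Int_absorb1)
  also have "\<dots> = {x [^]\<^bsub>H\<^esub> k | k. k \<in> (UNIV :: nat set)}"
    using group.generate_pow_on_finite_carrier[OF grp fin x] .
  finally show ?thesis using x by blast
qed

context asetup2 begin

lemma phi_inj:
  assumes meta: "metacyclic G"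
  shows "inj_on \<phi> (carrier S)"
proof -
  obtain N where nN: "N \<lhd> G" and cN: "cyclic_group (G\<lparr>carrier := N\<rparr>)" and cQ: "cyclic_group (G Mod N)"
    using meta unfolding metacyclic_def by blast
  interpret NN: normal N G by (rule nN)
  have sN: "subgroup N G" by (rule NN.subgroup_axioms)
  have NC: "N \<subseteq> carrier G" using NN.subset .
  have grpN: "group (G\<lparr>carrier := N\<rparr>)" using G.subgroup_imp_group[OF sN] .
  have finN: "finite (carrier (G\<lparr>carrier := N\<rparr>))" using fin NC by (simp add: finite_subset)
  obtain n0 where n0: "n0 \<in> N" and n0p': "\<forall>y\<in>N. \<exists>k::nat. y = n0 [^]\<^bsub>G\<lparr>carrier := N\<rparr>\<^esub> k"
  proof -
    have "\<exists>x\<in>N. \<forall>y\<in>N. \<exists>k::nat. y = x [^]\<^bsub>G\<lparr>carrier := N\<rparr>\<^esub> k"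
      using cyc_pow[OF grpN finN cN] by simp
    then show ?thesis using that by blast
  qed
  have n0p: "\<exists>k::nat. y = n0 [^]\<^bsub>G\<^esub> k" if yN: "y \<in> N" for y
  proof -
    obtain k :: nat where "y = n0 [^]\<^bsub>G\<lparr>carrier := N\<rparr>\<^esub> k" using bspec[OF n0p' yN] by (elim exE)
    then have "y = n0 [^]\<^bsub>G\<^esub> k" by (simp only: G.sub_pow)
    then show ?thesis by (rule exI)
  qed
  have n0c: "n0 \<in> carrier G" using n0 NC by blast
  have commN: "\<And>x y. x \<in> N \<Longrightarrow> y \<in> N \<Longrightarrow> x \<otimes>\<^bsub>G\<^esub> y = y \<otimes>\<^bsub>G\<^esub> x"
  proof -
    fix x y assume xy: "x \<in> N" "y \<in> N"
    obtain a :: nat where a: "x = n0 [^]\<^bsub>G\<^esub> a" using n0p[OF xy(1)] by blast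
    obtain b :: nat where b: "y = n0 [^]\<^bsub>G\<^esub> b" using n0p[OF xy(2)] by blast
    from a b show "x \<otimes>\<^bsub>G\<^esub> y = y \<otimes>\<^bsub>G\<^esub> x" using G.nat_pow_comm[OF n0c, of a b] by (simp only:)
  qed
  have grpQ: "group (G Mod N)" using NN.factorgroup_is_group .
  have finQ: "finite (carrier (G Mod N))"
  proof -
    have "carrier (G Mod N) \<subseteq> Pow (carrier G)"
      using NN.subset G.r_coset_subset_G unfolding FactGroup_def RCOSETS_def by auto
    then show ?thesis using fin by (simp add: finite_subset)
  qed
  obtain XX where XX: "XX \<in> carrier (G Mod N)" and Xp: "\<And>Y. Y \<in> carrier (G Mod N) \<Longrightarrow> \<exists>k::nat. Y = XX [^]\<^bsub>G Mod N\<^esub> k"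
    using cyc_pow[OF grpQ finQ cQ] by blast
  obtain g where g: "g \<in> carrier G" and Xg: "XX = N #>\<^bsub>G\<^esub> g"
    using XX unfolding FactGroup_def RCOSETS_def by auto
  have hN: "(\<lambda>a. N #>\<^bsub>G\<^esub> a) \<in> hom G (G Mod N)" using NN.r_coset_hom_Mod .
  have powX: "\<And>k::nat. XX [^]\<^bsub>G Mod N\<^esub> k = N #>\<^bsub>G\<^esub> (g [^]\<^bsub>G\<^esub> k)"
    using hom_nat_pow[OF hN g G.group_axioms grpQ] Xg by simp
  have decompG: "\<exists>n\<in>N. \<exists>k::nat. x = n \<otimes>\<^bsub>G\<^esub> g [^]\<^bsub>G\<^esub> k" if x: "x \<in> carrier G" for x
  proof -
    have "N #>\<^bsub>G\<^esub> x \<in> carrier (G Mod N)" using hom_in_carrier[OF hN x] by simp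
    then obtain k :: nat where "N #>\<^bsub>G\<^esub> x = XX [^]\<^bsub>G Mod N\<^esub> k" using Xp by blast
    then have "N #>\<^bsub>G\<^esub> x = N #>\<^bsub>G\<^esub> (g [^]\<^bsub>G\<^esub> k)" using powX by simp
    moreover have "x \<in> N #>\<^bsub>G\<^esub> x" using G.rcos_self[OF x sN] .
    ultimately have "x \<in> N #>\<^bsub>G\<^esub> (g [^]\<^bsub>G\<^esub> k)" by simp
    then show ?thesis unfolding r_coset_def by blast
  qed
  obtain u where u: "u \<in> carrier S" "\<phi> u = n0" using surj_ex n0c by blast
  obtain t where t: "t \<in> carrier S" "\<phi> t = g" using surj_ex g by blast
  define M where "M = {m \<in> carrier S. \<phi> m \<in> N}"
  have MC: "M \<subseteq> carrier S" unfolding M_def by blast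
  have central1: "k1 \<otimes>\<^bsub>S\<^esub> y = y \<otimes>\<^bsub>S\<^esub> k1"
    if "k1 \<in> carrier S" "\<phi> k1 = \<one>\<^bsub>G\<^esub>" "y \<in> carrier S" for k1 y
    using central_lift[OF that(1) _ that(3)] that(2) by simp
  have Mpow: "\<exists>a::nat. \<exists>k1\<in>carrier S. \<phi> k1 = \<one>\<^bsub>G\<^esub> \<and> m = u [^]\<^bsub>S\<^esub> a \<otimes>\<^bsub>S\<^esub> k1" if m: "m \<in> M" for m
  proof -
    have mc: "m \<in> carrier S" and pm: "\<phi> m \<in> N" using m unfolding M_def by auto
    obtain a :: nat where a: "\<phi> m = n0 [^]\<^bsub>G\<^esub> a" using n0p[OF pm] by blast
    let ?k = "inv\<^bsub>S\<^esub> (u [^]\<^bsub>S\<^esub> a) \<otimes>\<^bsub>S\<^esub> m"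
    have kc: "?k \<in> carrier S" using u mc by simp
    have "\<phi> ?k = \<one>\<^bsub>G\<^esub>" using u mc a ph.hom_nat_pow[of u a] n0c by simp
    moreover have "m = u [^]\<^bsub>S\<^esub> a \<otimes>\<^bsub>S\<^esub> ?k" using u mc by (simp add: S.cancel_simps)
    ultimately show ?thesis using kc by blast
  qed
  have Mcomm: "m1 \<otimes>\<^bsub>S\<^esub> m2 = m2 \<otimes>\<^bsub>S\<^esub> m1" if mm: "m1 \<in> M" "m2 \<in> M" for m1 m2
  proof -
    obtain a k1 where k1: "k1 \<in> carrier S" "\<phi> k1 = \<one>\<^bsub>G\<^esub>" and e1: "m1 = u [^]\<^bsub>S\<^esub> (a::nat) \<otimes>\<^bsub>S\<^esub> k1"
      using Mpow[OF mm(1)] by blast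
    obtain b k2 where k2: "k2 \<in> carrier S" "\<phi> k2 = \<one>\<^bsub>G\<^esub>" and e2: "m2 = u [^]\<^bsub>S\<^esub> (b::nat) \<otimes>\<^bsub>S\<^esub> k2"
      using Mpow[OF mm(2)] by blast
    have pa: "u [^]\<^bsub>S\<^esub> a \<in> carrier S" and pb: "u [^]\<^bsub>S\<^esub> b \<in> carrier S" using u by auto
    have c1: "k1 \<otimes>\<^bsub>S\<^esub> u [^]\<^bsub>S\<^esub> b = u [^]\<^bsub>S\<^esub> b \<otimes>\<^bsub>S\<^esub> k1" using central1[OF k1 pb] .
    have c2: "k2 \<otimes>\<^bsub>S\<^esub> u [^]\<^bsub>S\<^esub> a = u [^]\<^bsub>S\<^esub> a \<otimes>\<^bsub>S\<^esub> k2" using central1[OF k2 pa] .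
    have c3: "k1 \<otimes>\<^bsub>S\<^esub> k2 = k2 \<otimes>\<^bsub>S\<^esub> k1" using central1[OF k1 k2(1)] .
    have c4: "u [^]\<^bsub>S\<^esub> a \<otimes>\<^bsub>S\<^esub> u [^]\<^bsub>S\<^esub> b = u [^]\<^bsub>S\<^esub> b \<otimes>\<^bsub>S\<^esub> u [^]\<^bsub>S\<^esub> a"
      using S.nat_pow_comm u(1) by blast
    have "m1 \<otimes>\<^bsub>S\<^esub> m2 = u [^]\<^bsub>S\<^esub> a \<otimes>\<^bsub>S\<^esub> (k1 \<otimes>\<^bsub>S\<^esub> u [^]\<^bsub>S\<^esub> b) \<otimes>\<^bsub>S\<^esub> k2"
      using e1 e2 k1 k2 pa pb by (simp add: S.m_assoc)
    also have "\<dots> = (u [^]\<^bsub>S\<^esub> a \<otimes>\<^bsub>S\<^esub> u [^]\<^bsub>S\<^esub> b) \<otimes>\<^bsub>S\<^esub> (k1 \<otimes>\<^bsub>S\<^esub> k2)"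
      using c1 k1 k2 pa pb by (simp add: S.m_assoc)
    also have "\<dots> = (u [^]\<^bsub>S\<^esub> b \<otimes>\<^bsub>S\<^esub> u [^]\<^bsub>S\<^esub> a) \<otimes>\<^bsub>S\<^esub> (k2 \<otimes>\<^bsub>S\<^esub> k1)"
      using c3 c4 by simp
    also have "\<dots> = u [^]\<^bsub>S\<^esub> b \<otimes>\<^bsub>S\<^esub> (k2 \<otimes>\<^bsub>S\<^esub> u [^]\<^bsub>S\<^esub> a) \<otimes>\<^bsub>S\<^esub> k1"
      using c2 k1 k2 pa pb by (simp add: S.m_assoc)
    also have "\<dots> = m2 \<otimes>\<^bsub>S\<^esub> m1"
      using e1 e2 k1 k2 pa pb by (simp add: S.m_assoc)
    finally show ?thesis .
  qed
  have Mconj: "x \<otimes>\<^bsub>S\<^esub> m \<otimes>\<^bsub>S\<^esub> inv\<^bsub>S\<^esub> x \<in> M" if "m \<in> M" "x \<in> carrier S" for m x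
  proof -
    have mc: "m \<in> carrier S" and pm: "\<phi> m \<in> N" using that unfolding M_def by auto
    have "\<phi> (x \<otimes>\<^bsub>S\<^esub> m \<otimes>\<^bsub>S\<^esub> inv\<^bsub>S\<^esub> x) = \<phi> x \<otimes>\<^bsub>G\<^esub> \<phi> m \<otimes>\<^bsub>G\<^esub> inv\<^bsub>G\<^esub> \<phi> x"
      using mc that(2) by simp
    also have "\<dots> \<in> N" using NN.inv_op_closed2[OF ph.hom_closed[OF that(2)] pm] .
    finally show ?thesis using mc that(2) unfolding M_def by simp
  qed
  have Minv: "inv\<^bsub>S\<^esub> m \<in> M" if "m \<in> M" for m
    using that NN.m_inv_closed unfolding M_def by auto
  have Mone: "\<one>\<^bsub>S\<^esub> \<in> M" unfolding M_def using NN.one_closed by simp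
  define \<delta> where "\<delta> m = m \<otimes>\<^bsub>S\<^esub> t \<otimes>\<^bsub>S\<^esub> inv\<^bsub>S\<^esub> m \<otimes>\<^bsub>S\<^esub> inv\<^bsub>S\<^esub> t" for m
  define C where "C = \<delta> ` M"
  have sC: "subgroup C S"
  proof (rule S.subgroupI)
    show "C \<subseteq> carrier S" unfolding C_def \<delta>_def using MC t by auto
    show "C \<noteq> {}" unfolding C_def using Mone by blast
  next
    fix a assume "a \<in> C"
    then obtain m where m: "m \<in> M" and a: "a = \<delta> m" unfolding C_def by blast
    have mc: "m \<in> carrier S" using m MC by blast
    have h: "(t \<otimes>\<^bsub>S\<^esub> m \<otimes>\<^bsub>S\<^esub> inv\<^bsub>S\<^esub> t) \<otimes>\<^bsub>S\<^esub> inv\<^bsub>S\<^esub> m = inv\<^bsub>S\<^esub> m \<otimes>\<^bsub>S\<^esub> (t \<otimes>\<^bsub>S\<^esub> m \<otimes>\<^bsub>S\<^esub> inv\<^bsub>S\<^esub> t)"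
      using Mcomm[OF Mconj[OF m t(1)] Minv[OF m]] .
    have "inv\<^bsub>S\<^esub> a = \<delta> (inv\<^bsub>S\<^esub> m)" unfolding a \<delta>_def using S.delta_inv[OF mc t(1) h] .
    then show "inv\<^bsub>S\<^esub> a \<in> C" unfolding C_def using Minv[OF m] by blast
  next
    fix a b assume "a \<in> C" "b \<in> C"
    then obtain m1 m2 where m: "m1 \<in> M" "m2 \<in> M" and ab: "a = \<delta> m1" "b = \<delta> m2" unfolding C_def by blast
    have mc: "m1 \<in> carrier S" "m2 \<in> carrier S" using m MC by auto
    have A: "t \<otimes>\<^bsub>S\<^esub> inv\<^bsub>S\<^esub> m1 \<otimes>\<^bsub>S\<^esub> inv\<^bsub>S\<^esub> t \<in> M" using Mconj[OF Minv[OF m(1)] t(1)] .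
    have B: "t \<otimes>\<^bsub>S\<^esub> inv\<^bsub>S\<^esub> m2 \<otimes>\<^bsub>S\<^esub> inv\<^bsub>S\<^esub> t \<in> M" using Mconj[OF Minv[OF m(2)] t(1)] .
    have "a \<otimes>\<^bsub>S\<^esub> b = \<delta> (m1 \<otimes>\<^bsub>S\<^esub> m2)"
      unfolding ab \<delta>_def using S.delta_mult[OF mc t(1) Mcomm[OF A m(2)] Mcomm[OF A B]] .
    moreover have "m1 \<otimes>\<^bsub>S\<^esub> m2 \<in> M" using m NN.m_closed unfolding M_def by auto
    ultimately show "a \<otimes>\<^bsub>S\<^esub> b \<in> C" unfolding C_def by blast
  qed
  have Pj: "m \<otimes>\<^bsub>S\<^esub> t [^]\<^bsub>S\<^esub> j \<otimes>\<^bsub>S\<^esub> inv\<^bsub>S\<^esub> m \<otimes>\<^bsub>S\<^esub> inv\<^bsub>S\<^esub> (t [^]\<^bsub>S\<^esub> j) \<in> C"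
    if m: "m \<in> M" for m and j :: nat
  proof (induct j)
    case 0
    have mc: "m \<in> carrier S" using m MC by blast
    show ?case using mc subgroup.one_closed[OF sC] by simp
  next
    case (Suc j)
    have mc: "m \<in> carrier S" using m MC by blast
    have tj: "t [^]\<^bsub>S\<^esub> j \<in> carrier S" using t by simp
    have y: "t [^]\<^bsub>S\<^esub> j \<otimes>\<^bsub>S\<^esub> m \<otimes>\<^bsub>S\<^esub> inv\<^bsub>S\<^esub> (t [^]\<^bsub>S\<^esub> j) \<in> M" using Mconj[OF m tj] .
    have "\<delta> (t [^]\<^bsub>S\<^esub> j \<otimes>\<^bsub>S\<^esub> m \<otimes>\<^bsub>S\<^esub> inv\<^bsub>S\<^esub> (t [^]\<^bsub>S\<^esub> j)) \<in> C" unfolding C_def using y by blast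
    then show ?case using S.pstep[OF mc t(1), of j] subgroup.m_closed[OF sC Suc] unfolding \<delta>_def by simp
  qed
  have decompS: "\<exists>m\<in>M. \<exists>k::nat. a = m \<otimes>\<^bsub>S\<^esub> t [^]\<^bsub>S\<^esub> k" if a: "a \<in> carrier S" for a
  proof -
    obtain n k where n: "n \<in> N" and e: "\<phi> a = n \<otimes>\<^bsub>G\<^esub> g [^]\<^bsub>G\<^esub> (k::nat)"
      using decompG[OF ph.hom_closed[OF a]] by blast
    let ?m = "a \<otimes>\<^bsub>S\<^esub> inv\<^bsub>S\<^esub> (t [^]\<^bsub>S\<^esub> k)"
    have nc: "n \<in> carrier G" using n NC by blast
    have "\<phi> ?m = \<phi> a \<otimes>\<^bsub>G\<^esub> inv\<^bsub>G\<^esub> (g [^]\<^bsub>G\<^esub> k)"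
      using a t ph.hom_nat_pow[of t k] by simp
    also have "\<dots> = n" using e nc g by (simp add: G.m_assoc)
    finally have "?m \<in> M" using a t n unfolding M_def by simp
    moreover have "a = ?m \<otimes>\<^bsub>S\<^esub> t [^]\<^bsub>S\<^esub> k" using a t by (simp add: S.m_assoc)
    ultimately show ?thesis by blast
  qed
  have dset: "derived_set S (carrier S) \<subseteq> C"
  proof
    fix z assume "z \<in> derived_set S (carrier S)"
    then obtain a b where a: "a \<in> carrier S" and b: "b \<in> carrier S"
      and z: "z = a \<otimes>\<^bsub>S\<^esub> b \<otimes>\<^bsub>S\<^esub> inv\<^bsub>S\<^esub> a \<otimes>\<^bsub>S\<^esub> inv\<^bsub>S\<^esub> b" by blast
    obtain m1 i where m1: "m1 \<in> M" and ea: "a = m1 \<otimes>\<^bsub>S\<^esub> t [^]\<^bsub>S\<^esub> (i::nat)" using decompS[OF a] by blast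
    obtain m2 j where m2: "m2 \<in> M" and eb: "b = m2 \<otimes>\<^bsub>S\<^esub> t [^]\<^bsub>S\<^esub> (j::nat)" using decompS[OF b] by blast
    have mc: "m1 \<in> carrier S" "m2 \<in> carrier S" using m1 m2 MC by auto
    have ti: "t [^]\<^bsub>S\<^esub> i \<in> carrier S" and tj: "t [^]\<^bsub>S\<^esub> j \<in> carrier S" using t by auto
    have XX: "t [^]\<^bsub>S\<^esub> j \<otimes>\<^bsub>S\<^esub> inv\<^bsub>S\<^esub> m1 \<otimes>\<^bsub>S\<^esub> inv\<^bsub>S\<^esub> (t [^]\<^bsub>S\<^esub> j) \<in> M"
      using Mconj[OF Minv[OF m1] tj] .
    have Y: "t [^]\<^bsub>S\<^esub> i \<otimes>\<^bsub>S\<^esub> m2 \<otimes>\<^bsub>S\<^esub> inv\<^bsub>S\<^esub> (t [^]\<^bsub>S\<^esub> i) \<in> M"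
      using Mconj[OF m2 ti] .
    have "z = (m1 \<otimes>\<^bsub>S\<^esub> t [^]\<^bsub>S\<^esub> j \<otimes>\<^bsub>S\<^esub> inv\<^bsub>S\<^esub> m1 \<otimes>\<^bsub>S\<^esub> inv\<^bsub>S\<^esub> (t [^]\<^bsub>S\<^esub> j))
        \<otimes>\<^bsub>S\<^esub> inv\<^bsub>S\<^esub> (m2 \<otimes>\<^bsub>S\<^esub> t [^]\<^bsub>S\<^esub> i \<otimes>\<^bsub>S\<^esub> inv\<^bsub>S\<^esub> m2 \<otimes>\<^bsub>S\<^esub> inv\<^bsub>S\<^esub> (t [^]\<^bsub>S\<^esub> i))"
      unfolding z ea eb using S.comm_decomp[OF mc t(1) Mcomm[OF XX Y]] .
    then show "z \<in> C" using Pj[OF m1] Pj[OF m2] subgroup.m_closed[OF sC] subgroup.m_inv_closed[OF sC] by simp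
  qed
  have DC0: "generate S (derived_set S (carrier S)) \<subseteq> C" by (rule S.generate_subgroup_incl[OF dset sC])
  have DC: "Ds \<subseteq> C" using DC0 by (simp only: derived_def)
  show ?thesis
  proof (rule ph.trivial_ker_imp_inj)
    show "kernel S G \<phi> = {\<one>\<^bsub>S\<^esub>}"
    proof
      show "{\<one>\<^bsub>S\<^esub>} \<subseteq> kernel S G \<phi>" unfolding kernel_def by simp
      show "kernel S G \<phi> \<subseteq> {\<one>\<^bsub>S\<^esub>}"
      proof
        fix s assume "s \<in> kernel S G \<phi>"
        then have s: "s \<in> carrier S" and ps: "\<phi> s = \<one>\<^bsub>G\<^esub>" unfolding kernel_def by auto
        have "\<one>\<^bsub>G\<^esub> \<in> Dg" using subgroup.one_closed[OF G.derived_is_subgroup[OF subset_refl]] .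
        then have "s \<in> Ds" using abel[OF s] ps by simp
        then have "s \<in> C" using DC by blast
        then obtain m where m: "m \<in> M" and sm: "s = \<delta> m" unfolding C_def by blast
        have mc: "m \<in> carrier S" and pmN: "\<phi> m \<in> N" using m unfolding M_def by auto
        have pmc: "\<phi> m \<in> carrier G" using ph.hom_closed[OF mc] .
        have "\<phi> m \<otimes>\<^bsub>G\<^esub> g \<otimes>\<^bsub>G\<^esub> inv\<^bsub>G\<^esub> (\<phi> m) \<otimes>\<^bsub>G\<^esub> inv\<^bsub>G\<^esub> g = \<one>\<^bsub>G\<^esub>"
          using ps sm mc t unfolding \<delta>_def by simp
        from G.inv_equality_helper[OF this]
        have "\<phi> m \<otimes>\<^bsub>G\<^esub> g \<otimes>\<^bsub>G\<^esub> inv\<^bsub>G\<^esub> (\<phi> m) = g"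
          using pmc g by simp
        then have "(\<phi> m \<otimes>\<^bsub>G\<^esub> g \<otimes>\<^bsub>G\<^esub> inv\<^bsub>G\<^esub> (\<phi> m)) \<otimes>\<^bsub>G\<^esub> \<phi> m = g \<otimes>\<^bsub>G\<^esub> \<phi> m" by simp
        then have mg: "g \<otimes>\<^bsub>G\<^esub> \<phi> m = \<phi> m \<otimes>\<^bsub>G\<^esub> g"
          using pmc g by (simp add: G.m_assoc)
        have cent: "\<phi> m \<otimes>\<^bsub>G\<^esub> x = x \<otimes>\<^bsub>G\<^esub> \<phi> m" if x: "x \<in> carrier G" for x
        proof -
          obtain n k where n: "n \<in> N" and e: "x = n \<otimes>\<^bsub>G\<^esub> g [^]\<^bsub>G\<^esub> (k::nat)" using decompG[OF x] by blast
          have nc: "n \<in> carrier G" using n NC by blast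
          have gk: "g [^]\<^bsub>G\<^esub> k \<otimes>\<^bsub>G\<^esub> \<phi> m = \<phi> m \<otimes>\<^bsub>G\<^esub> g [^]\<^bsub>G\<^esub> k"
            using G.group_commutes_pow[OF mg g pmc] .
          have "\<phi> m \<otimes>\<^bsub>G\<^esub> x = (\<phi> m \<otimes>\<^bsub>G\<^esub> n) \<otimes>\<^bsub>G\<^esub> g [^]\<^bsub>G\<^esub> k" using e nc g pmc by (simp add: G.m_assoc)
          also have "\<dots> = n \<otimes>\<^bsub>G\<^esub> (\<phi> m \<otimes>\<^bsub>G\<^esub> g [^]\<^bsub>G\<^esub> k)" using commN[OF pmN n] nc g pmc by (simp add: G.m_assoc)
          also have "\<dots> = x \<otimes>\<^bsub>G\<^esub> \<phi> m" using gk e nc g pmc by (simp add: G.m_assoc)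
          finally show ?thesis .
        qed
        have "m \<otimes>\<^bsub>S\<^esub> t = t \<otimes>\<^bsub>S\<^esub> m" using central_lift[OF mc cent t(1)] .
        then show "s \<in> {\<one>\<^bsub>S\<^esub>}" using sm mc t unfolding \<delta>_def by (simp add: S.m_assoc S.cancel_simps)
      qed
    qed
  qed
qed

end

theorem corollary3p2:
  fixes G :: "('a, 'b) monoid_scheme" and \<F> :: "'a set set"
  assumes "group G" and "finite (carrier G)" and "metacyclic G"
    and "family G \<F>" and "generating G \<F>" and "conj_closed G \<F>"
    and "regular_family G \<F>" and "independent_family G \<F>"
  shows "active_sum_hom G \<F> \<in> iso (active_sum G \<F>) G"
proof -
  interpret A: asetup2 G \<F>
    by (intro asetup2.intro asetup.intro asetup2_axioms.intro) (use assms in auto)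
  have h: "active_sum_hom G \<F> \<in> hom (active_sum G \<F>) G" by (rule A.phi_hom)
  have i: "inj_on (active_sum_hom G \<F>) (carrier (active_sum G \<F>))" by (rule A.phi_inj[OF assms(3)])
  have s: "active_sum_hom G \<F> ` carrier (active_sum G \<F>) = carrier G" by (rule A.phi_surj[OF assms(5)])
  show ?thesis using h i s unfolding iso_def bij_betw_def by blast
qed

end
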